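(* Let $n\ge6$ be even and let $\varrho:G_n\to\mathcal L$ be a homomorphism. Then $\mathrm{Area}_i(p,q;\varrho)$ does not depend on the choice of $p,q\in\overline{\mathrm B}W$ nor on $i\in\{1,\dots,n\}$.
   Context: Let $W$ be a 2-dimensional complex vector space with a hermitian form $\langle\cdot,\cdot\rangle$ of signature $(+,-)$. In $\mathbb{CP}W$ let $\mathrm BW$ be the negative points (the Poincaré disc, curvature $-1$, oriented by its complex structure), $\mathrm SW$ the isotropic points, $\overline{\mathrm B}W=\mathrm BW\cup\mathrm SW$; $\mathcal L=\mathrm{PU}(W)$ is the group of orientation-preserving isometries of $\mathrm BW$. Oriented triangle area: $\mathrm{Area}\,\Delta(p_1,p_2,p_3)=2\arg(-\langle p_1,p_2\rangle\langle p_2,p_3\rangle\langle p_3,p_1\rangle)$ ($\arg\in[-\pi,\pi]$) if no two vertices are equal isotropic points, $0$ otherwise. $\mathrm{Area}(p_1,\dots,p_m):=\sum_{k=1}^m\mathrm{Area}\,\Delta(c,p_k,p_{k+1})$ (indices mod $m$), independent of $c\in\overline{\mathrm B}W$. $H_n$ is the group generated by $r_1,\dots,r_n$ with relations $r_i^2=1$, $r_n\cdots r_1=1$, indices mod $n$; for even $n$, $G_n\le H_n$ is the index-2 subgroup of words of even length in the $r_i$. $S$ is the automorphism of $H_n$ with $Sr_i=r_{i+1}$ (it preserves $G_n$). Put $v_i:=r_i\cdots r_2r_1$ for $0\le i\le n-1$ ($v_0=1$); for $0\le i\le n-2$ put $w_i:=v_i$ if $i$ is even and $w_i:=v_ir_n$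 if $i$ is odd, and $w_{i+n-1}:=r_nw_ir_n$; indices of the $w_i$ are mod $2n-2$; all $w_i\in G_n$. Write $w_ix$ for $\varrho(w_i)x$. Define $\mathrm{Area}_n(p,q;\varrho):=\mathrm{Area}(w_0p,w_1q,w_2p,w_3q,\dots,w_{2n-4}p,w_{2n-3}q)$ (the $2n-2$ points $w_jx_j$, $x_j=p$ for even $j$, $x_j=q$ for odd $j$), and for $1\le i\le n$, $\mathrm{Area}_i(p,q;\varrho):=\mathrm{Area}_n(p,q;\varrho\circ S^i)$. *)

theory Defs
  imports "HOL-Analysis.Analysis"
begin

text \<open>Model of W: the space complex^2 with a hermitian form given by a hermitian
  matrix H (linear in the first slot, conjugate-linear in the second).
  Signature (+,-) for a 2x2 hermitian matrix means det H < 0.\<close>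

definition herm :: "complex^2^2 \<Rightarrow> complex^2 \<Rightarrow> complex^2 \<Rightarrow> complex" where
  "herm H u v = (\<Sum>i\<in>UNIV. \<Sum>j\<in>UNIV. u$i * H$i$j * cnj (v$j))"

definition hermitian_sig11 :: "complex^2^2 \<Rightarrow> bool" where
  "hermitian_sig11 H \<longleftrightarrow> (\<forall>i j. H$i$j = cnj (H$j$i)) \<and> Re (det H) < 0"

text \<open>Points of CP W are represented by nonzero lifts; projective equality.\<close>
definition proj_eq :: "complex^2 \<Rightarrow> complex^2 \<Rightarrow> bool" where
  "proj_eq u v \<longleftrightarrow> (\<exists>c. c \<noteq> 0 \<and> u = c *s v)"

definition isotropic :: "complex^2^2 \<Rightarrow> complex^2 \<Rightarrow> bool" where
  "isotropic H v \<longleftrightarrow> v \<noteq> 0 \<and> herm H v v = 0"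

text \<open>closed disc: nonzero lifts of negative or isotropic points\<close>
definition cdisc :: "complex^2^2 \<Rightarrow> (complex^2) set" where
  "cdisc H = {v. v \<noteq> 0 \<and> Re (herm H v v) \<le> 0}"

definition eq_iso :: "complex^2^2 \<Rightarrow> complex^2 \<Rightarrow> complex^2 \<Rightarrow> bool" where
  "eq_iso H u v \<longleftrightarrow> isotropic H u \<and> isotropic H v \<and> proj_eq u v"

definition tri_area :: "complex^2^2 \<Rightarrow> complex^2 \<Rightarrow> complex^2 \<Rightarrow> complex^2 \<Rightarrow> real" where
  "tri_area H p1 p2 p3 =
     (if eq_iso H p1 p2 \<or> eq_iso H p2 p3 \<or> eq_iso H p3 p1 then 0
      else 2 * Arg (- (herm H p1 p2 * herm H p2 p3 * herm H p3 p1)))"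

definition poly_area_c :: "complex^2^2 \<Rightarrow> complex^2 \<Rightarrow> (complex^2) list \<Rightarrow> real" where
  "poly_area_c H c ps =
     (\<Sum>k<length ps. tri_area H c (ps ! k) (ps ! ((k + 1) mod length ps)))"

text \<open>Area(p_1,...,p_m), computed with an (arbitrary) base point c in the closed disc.\<close>
definition poly_area :: "complex^2^2 \<Rightarrow> (complex^2) list \<Rightarrow> real" where
  "poly_area H ps = poly_area_c H (SOME c. c \<in> cdisc H) ps"

text \<open>U(W): matrices preserving the hermitian form. PU(W) = U(W) modulo scalars.\<close>
definition unitary_H :: "complex^2^2 \<Rightarrow> complex^2^2 \<Rightarrow> bool" where
  "unitary_H H A \<longleftrightarrow> (\<forall>u v. herm H (A *v u) (A *v v) = herm H u v)"

definition mproj_eq :: "complex^2^2 \<Rightarrow> complex^2^2 \<Rightarrow> bool" where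
  "mproj_eq A B \<longleftrightarrow> (\<exists>c. c \<noteq> 0 \<and> A = (\<chi> i j. c * B$i$j))"

text \<open>Words in the generators r_1..r_n: lists over {1..n}; the list [a1,...,ak]
  stands for the product r_a1 r_a2 ... r_ak.  Equality in H_n is the congruence
  generated by r_i^2 = 1 and r_n ... r_1 = 1.\<close>
definition valid_word :: "nat \<Rightarrow> nat list \<Rightarrow> bool" where
  "valid_word n u \<longleftrightarrow> set u \<subseteq> {1..n}"

inductive hn_eq :: "nat \<Rightarrow> nat list \<Rightarrow> nat list \<Rightarrow> bool" for n where
  refl: "hn_eq n u u"
| sym: "hn_eq n u v \<Longrightarrow> hn_eq n v u"
| trans: "hn_eq n u v \<Longrightarrow> hn_eq n v w \<Longrightarrow> hn_eq n u w"
| sq: "i \<in> {1..n} \<Longrightarrow> hn_eq n (u @ [i, i] @ v) (u @ v)"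
| rel: "hn_eq n (u @ rev [1..<n+1] @ v) (u @ v)"

text \<open>A homomorphism G_n \<rightarrow> PU(W), given on (even-length) words by matrix lifts.\<close>
definition hom_Gn :: "nat \<Rightarrow> complex^2^2 \<Rightarrow> (nat list \<Rightarrow> complex^2^2) \<Rightarrow> bool" where
  "hom_Gn n H \<rho> \<longleftrightarrow>
     (\<forall>u. valid_word n u \<and> even (length u) \<longrightarrow> unitary_H H (\<rho> u)) \<and>
     mproj_eq (\<rho> []) (mat 1) \<and>
     (\<forall>u v. valid_word n u \<and> even (length u) \<and> valid_word n v \<and> even (length v) \<longrightarrow>
        mproj_eq (\<rho> (u @ v)) (\<rho> u ** \<rho> v)) \<and>
     (\<forall>u v. valid_word n u \<and> even (length u) \<and> valid_word n v \<and> even (length v) \<and> hn_eq n u v \<longrightarrow>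
        mproj_eq (\<rho> u) (\<rho> v))"

text \<open>The automorphism S: r_i \<mapsto> r_(i+1), indices mod n (in {1..n}).\<close>
definition shift :: "nat \<Rightarrow> nat \<Rightarrow> nat" where
  "shift n i = (if i = n then 1 else i + 1)"

definition vword :: "nat \<Rightarrow> nat list" where
  "vword i = rev [1..<i+1]"

definition wword :: "nat \<Rightarrow> nat \<Rightarrow> nat list" where
  "wword n j =
    (let w = (\<lambda>i. if even i then vword i else vword i @ [n]) in
     if j \<le> n - 2 then w j else [n] @ w (j - (n - 1)) @ [n])"

definition Area_n :: "nat \<Rightarrow> complex^2^2 \<Rightarrow> complex^2 \<Rightarrow> complex^2 \<Rightarrow> (nat list \<Rightarrow> complex^2^2) \<Rightarrow> real" where
  "Area_n n H p q \<rho> =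
     poly_area H (map (\<lambda>j. \<rho> (wword n j) *v (if even j then p else q)) [0..<2*n-2])"

definition Area_i :: "nat \<Rightarrow> nat \<Rightarrow> complex^2^2 \<Rightarrow> complex^2 \<Rightarrow> complex^2 \<Rightarrow> (nat list \<Rightarrow> complex^2^2) \<Rightarrow> real" where
  "Area_i n i H p q \<rho> = Area_n n H p q (\<lambda>u. \<rho> (map (shift n ^^ i) u))"

end

theory Submission
  imports Defs
begin

section \<open>Hermitian form basics\<close>

definition hp :: "complex \<Rightarrow> complex \<Rightarrow> complex \<Rightarrow> complex \<Rightarrow> complex \<Rightarrow> complex \<Rightarrow> complex \<Rightarrow> complex \<Rightarrow> complex" where
  "hp h11 h12 h21 h22 a1 a2 b1 b2 = a1*h11*b1 + a1*h12*b2 + a2*h21*b1 + a2*h22*b2"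

lemma gram3_poly:
  "hp h11 h12 h21 h22 x1 x2 w1 w2 * (hp h11 h12 h21 h22 y1 y2 s1 s2 * hp h11 h12 h21 h22 z1 z2 u1 u2 - hp h11 h12 h21 h22 y1 y2 u1 u2 * hp h11 h12 h21 h22 z1 z2 s1 s2)
       - hp h11 h12 h21 h22 x1 x2 s1 s2 * (hp h11 h12 h21 h22 y1 y2 w1 w2 * hp h11 h12 h21 h22 z1 z2 u1 u2 - hp h11 h12 h21 h22 y1 y2 u1 u2 * hp h11 h12 h21 h22 z1 z2 w1 w2)
       + hp h11 h12 h21 h22 x1 x2 u1 u2 * (hp h11 h12 h21 h22 y1 y2 w1 w2 * hp h11 h12 h21 h22 z1 z2 s1 s2 - hp h11 h12 h21 h22 y1 y2 s1 s2 * hp h11 h12 h21 h22 z1 z2 w1 w2) = 0"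
  unfolding hp_def by (simp add: algebra_simps)

lemma gram2_poly:
  "hp h11 h12 h21 h22 x1 x2 w1 w2 * hp h11 h12 h21 h22 y1 y2 s1 s2 - hp h11 h12 h21 h22 x1 x2 s1 s2 * hp h11 h12 h21 h22 y1 y2 w1 w2
   = (h11*h22 - h12*h21) * (x1 * y2 - x2 * y1) * (w1 * s2 - w2 * s1)"
  unfolding hp_def by (simp add: algebra_simps)

lemma herm_hp: "herm H u v = hp (H$1$1) (H$1$2) (H$2$1) (H$2$2) (u$1) (u$2) (cnj (v$1)) (cnj (v$2))"
  by (simp add: herm_def hp_def sum_2 algebra_simps)

lemma herm_expand: "herm H u v = u$1*H$1$1*cnj(v$1) + u$1*H$1$2*cnj(v$2) + u$2*H$2$1*cnj(v$1) + u$2*H$2$2*cnj(v$2)"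
  by (simp add: herm_hp hp_def)

lemma herm_scale_l: "herm H (c *s u) v = c * herm H u v"
  by (simp add: herm_expand algebra_simps)

lemma herm_scale_r: "herm H u (c *s v) = cnj c * herm H u v"
  by (simp add: herm_expand algebra_simps)

lemma herm_zero_l [simp]: "herm H 0 v = 0"
  by (simp add: herm_expand)

lemma hsig_entries:
  assumes "hermitian_sig11 H"
  shows "cnj (H$1$1) = H$1$1" "cnj (H$2$2) = H$2$2" "cnj (H$1$2) = H$2$1" "cnj (H$2$1) = H$1$2"
  using assms unfolding hermitian_sig11_def
  by (metis complex_cnj_cnj)+

lemma herm_cnj:
  assumes "hermitian_sig11 H"
  shows "herm H v u = cnj (herm H u v)"
  using hsig_entries[OF assms] by (simp add: herm_expand algebra_simps)

lemma herm_self_real: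
  assumes "hermitian_sig11 H"
  shows "herm H x x = complex_of_real (Re (herm H x x))"
proof -
  have "cnj (herm H x x) = herm H x x" using herm_cnj[OF assms, of x x] by simp
  then have "herm H x x \<in> \<real>" by (simp add: Reals_cnj_iff)
  then show ?thesis by (simp add: of_real_Re)
qed

definition dlt :: "complex^2 \<Rightarrow> complex^2 \<Rightarrow> complex" where
  "dlt x y = x$1 * y$2 - x$2 * y$1"

lemma det_real:
  assumes "hermitian_sig11 H"
  shows "H$1$1*H$2$2 - H$1$2*H$2$1 = complex_of_real (Re (det H))"
proof -
  have d: "det H = H$1$1*H$2$2 - H$1$2*H$2$1" by (simp add: det_2)
  have "cnj (H$1$1*H$2$2 - H$1$2*H$2$1) = H$1$1*H$2$2 - H$1$2*H$2$1"
    using hsig_entries[OF assms] by (simp add: algebra_simps)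
  then have "H$1$1*H$2$2 - H$1$2*H$2$1 \<in> \<real>"
    by (simp only: Reals_cnj_iff)
  then show ?thesis unfolding d by (simp only: of_real_Re)
qed

lemma gram2:
  assumes "hermitian_sig11 H"
  shows "Re (herm H x x) * Re (herm H y y) - (cmod (herm H x y))^2 = Re (det H) * (cmod (dlt x y))^2"
proof -
  have g: "herm H x x * herm H y y - herm H x y * herm H y x
      = (H$1$1*H$2$2 - H$1$2*H$2$1) * dlt x y * cnj (dlt x y)"
    unfolding herm_hp dlt_def using gram2_poly by simp
  have a: "herm H x y * herm H y x = complex_of_real ((cmod (herm H x y))^2)"
    by (simp only: herm_cnj[OF assms, of y x] complex_norm_square)
  have b: "dlt x y * cnj (dlt x y) = complex_of_real ((cmod (dlt x y))^2)"
    by (simp only: complex_norm_square)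
  have "complex_of_real (Re (herm H x x) * Re (herm H y y) - (cmod (herm H x y))^2)
       = complex_of_real (Re (det H) * (cmod (dlt x y))^2)"
    using g unfolding a det_real[OF assms] mult.assoc b
    by (simp add: herm_self_real[OF assms, symmetric])
  then show ?thesis by (simp only: of_real_eq_iff)
qed

lemma gram3:
  "herm H x u * (herm H y v * herm H z w - herm H y w * herm H z v)
   - herm H x v * (herm H y u * herm H z w - herm H y w * herm H z u)
   + herm H x w * (herm H y u * herm H z v - herm H y v * herm H z u) = 0"
  unfolding herm_hp by (rule gram3_poly)

lemma dlt_zero_prop:
  assumes "x \<noteq> 0" "y \<noteq> 0" "dlt x y = 0"
  shows "\<exists>c. c \<noteq> 0 \<and> x = c *s y"
proof (cases "y$1 = 0")
  case True
  then have y2: "y$2 \<noteq> 0" using assms(2) by (metis exhaust_2 vec_eq_iff zero_index)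
  have x1: "x$1 = 0" using assms(3) True y2 by (simp add: dlt_def)
  define c where "c = x$2 / y$2"
  have "x = c *s y" unfolding vec_eq_iff using x1 True y2 by (simp add: c_def forall_2)
  moreover have "c \<noteq> 0" using assms(1) \<open>x = c *s y\<close> by auto
  ultimately show ?thesis by blast
next
  case False
  define c where "c = x$1 / y$1"
  have "x$2 = c * y$2" using assms(3) False by (simp add: dlt_def c_def field_simps)
  then have "x = c *s y" unfolding vec_eq_iff using False by (simp add: c_def forall_2)
  moreover have "c \<noteq> 0" using assms(1) \<open>x = c *s y\<close> by auto
  ultimately show ?thesis by blast
qed

lemma cdisc_iff: "x \<in> cdisc H \<longleftrightarrow> x \<noteq> 0 \<and> Re (herm H x x) \<le> 0"
  by (simp add: cdisc_def)

lemma rcs: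
  assumes "hermitian_sig11 H"
  shows "Re (herm H x x) * Re (herm H y y) \<le> (cmod (herm H x y))^2"
proof -
  have "Re (det H) < 0" using assms by (simp add: hermitian_sig11_def)
  then have "Re (det H) * (cmod (dlt x y))^2 \<le> 0" by (simp add: mult_nonpos_nonneg)
  then show ?thesis using gram2[OF assms, of x y] by linarith
qed

lemma herm_zero_eq_iso:
  assumes H: "hermitian_sig11 H" and x: "x \<in> cdisc H" and y: "y \<in> cdisc H"
    and z: "herm H x y = 0"
  shows "eq_iso H x y"
proof -
  have dn: "Re (det H) < 0" using H by (simp add: hermitian_sig11_def)
  have xx: "Re (herm H x x) \<le> 0" and yy: "Re (herm H y y) \<le> 0" and x0: "x \<noteq> 0" and y0: "y \<noteq> 0"
    using x y by (auto simp: cdisc_def)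
  have pn: "Re (herm H x x) * Re (herm H y y) \<ge> 0" using xx yy by (simp add: mult_nonpos_nonpos)
  have g: "Re (herm H x x) * Re (herm H y y) = Re (det H) * (cmod (dlt x y))^2"
    using gram2[OF H, of x y] z by simp
  have "Re (det H) * (cmod (dlt x y))^2 \<le> 0" using dn by (simp add: mult_nonpos_nonneg)
  then have p0: "Re (herm H x x) * Re (herm H y y) = 0" and "Re (det H) * (cmod (dlt x y))^2 = 0"
    using pn g by linarith+
  then have "dlt x y = 0" using dn by simp
  then obtain c where c: "c \<noteq> 0" "x = c *s y" using dlt_zero_prop x0 y0 by blast
  have "herm H x x = c * cnj c * herm H y y" using c by (simp add: herm_scale_l herm_scale_r)
  then have "herm H x x = complex_of_real ((cmod c)^2) * herm H y y"
    by (simp only: complex_norm_square)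
  then have rx: "Re (herm H x x) = (cmod c)^2 * Re (herm H y y)" by simp
  have "Re (herm H y y) = 0"
  proof (rule ccontr)
    assume "Re (herm H y y) \<noteq> 0"
    then have "Re (herm H x x) \<noteq> 0" using rx c by simp
    then show False using p0 \<open>Re (herm H y y) \<noteq> 0\<close> by simp
  qed
  then have "Re (herm H x x) = 0" using rx by simp
  have "herm H x x = 0" using herm_self_real[OF H, of x] \<open>Re (herm H x x) = 0\<close> by simp
  moreover have "herm H y y = 0" using herm_self_real[OF H, of y] \<open>Re (herm H y y) = 0\<close> by simp
  ultimately show ?thesis using x0 y0 c unfolding eq_iso_def isotropic_def proj_eq_def by blast
qed

lemma eq_iso_herm_zero:
  assumes "eq_iso H x y"
  shows "herm H x y = 0"
proof -
  obtain c where "x = c *s y" using assms unfolding eq_iso_def proj_eq_def by blast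
  moreover have "herm H y y = 0" using assms unfolding eq_iso_def isotropic_def by blast
  ultimately show ?thesis by (simp add: herm_scale_l)
qed

section \<open>The triangle quantity\<close>

definition gT :: "complex^2^2 \<Rightarrow> complex^2 \<Rightarrow> complex^2 \<Rightarrow> complex^2 \<Rightarrow> complex" where
  "gT H a b c = - (herm H a b * herm H b c * herm H c a)"

definition tA :: "complex^2^2 \<Rightarrow> complex^2 \<Rightarrow> complex^2 \<Rightarrow> complex^2 \<Rightarrow> real" where
  "tA H a b c = 2 * Arg (gT H a b c)"

lemma tri_area_tA:
  assumes "hermitian_sig11 H"
  shows "tri_area H a b c = tA H a b c"
proof (cases "eq_iso H a b \<or> eq_iso H b c \<or> eq_iso H c a")
  case True
  then have "gT H a b c = 0" unfolding gT_def using eq_iso_herm_zero by fastforce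
  then show ?thesis using True by (simp add: tri_area_def tA_def Arg_zero)
next
  case False
  then show ?thesis by (simp add: tri_area_def tA_def gT_def)
qed

lemma gT_cyc: "gT H a b c = gT H b c a"
  by (simp add: gT_def algebra_simps)

lemma gT_swap:
  assumes "hermitian_sig11 H"
  shows "gT H a c b = cnj (gT H a b c)"
  by (simp add: gT_def herm_cnj[OF assms, of a c] herm_cnj[OF assms, of c b] herm_cnj[OF assms, of b a])

lemma gT_scale1: "gT H (k *s a) b c = complex_of_real ((cmod k)^2) * gT H a b c"
  by (simp add: gT_def herm_scale_l herm_scale_r complex_norm_square[symmetric] algebra_simps)

lemma gT_unitary:
  assumes "unitary_H H A"
  shows "gT H (A *v a) (A *v b) (A *v c) = gT H a b c"
  using assms by (simp add: gT_def unitary_H_def)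

lemma tA_scale1:
  assumes "k \<noteq> 0"
  shows "tA H (k *s a) b c = tA H a b c"
proof -
  have p: "(cmod k)^2 > 0" using assms by simp
  show ?thesis unfolding tA_def gT_scale1 by (simp only: Arg_times_of_real[OF p])
qed

lemma tA_cyc: "tA H a b c = tA H b c a"
  by (simp add: tA_def gT_cyc[of H a b c])

lemma tA_scale2: "k \<noteq> 0 \<Longrightarrow> tA H a (k *s b) c = tA H a b c"
  by (metis tA_cyc tA_scale1)

lemma tA_scale3: "k \<noteq> 0 \<Longrightarrow> tA H a b (k *s c) = tA H a b c"
  by (metis tA_cyc tA_scale1)

lemma tA_unitary:
  assumes "unitary_H H A"
  shows "tA H (A *v a) (A *v b) (A *v c) = tA H a b c"
  using gT_unitary[OF assms] by (simp add: tA_def)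

lemma tA_proj:
  assumes "proj_eq a a'" "proj_eq b b'" "proj_eq c c'"
  shows "tA H a b c = tA H a' b' c'"
  using assms unfolding proj_eq_def by (auto simp: tA_scale1 tA_scale2 tA_scale3)

lemma re_id:
  fixes X Y Z :: complex and A B C :: real
  assumes "complex_of_real A * (complex_of_real B * complex_of_real C - Y * cnj Y) - X * (cnj X * complex_of_real C - Y * Z) + cnj Z * (cnj X * cnj Y - complex_of_real B * Z) = 0"
  shows "2 * Re (X*Y*Z) = A * (cmod Y)^2 + B*(cmod Z)^2 + C*(cmod X)^2 - A*B*C"
proof -
  have "Re (complex_of_real A * (complex_of_real B * complex_of_real C - Y * cnj Y) - X * (cnj X * complex_of_real C - Y * Z) + cnj Z * (cnj X * cnj Y - complex_of_real B * Z)) = 0"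
    using assms by simp
  then show ?thesis unfolding cmod_power2 by (simp add: power2_eq_square algebra_simps)
qed

lemma gT_re2:
  assumes H: "hermitian_sig11 H"
  shows "2 * Re (gT H a b c) = - (Re (herm H a a) * (cmod (herm H b c))^2) - Re (herm H b b) * (cmod (herm H c a))^2
          - Re (herm H c c) * (cmod (herm H a b))^2 + Re (herm H a a) * Re (herm H b b) * Re (herm H c c)"
proof -
  define A where "A = Re (herm H a a)"
  define B where "B = Re (herm H b b)"
  define C where "C = Re (herm H c c)"
  have ha: "herm H a a = complex_of_real A" unfolding A_def by (rule herm_self_real[OF H])
  have hb: "herm H b b = complex_of_real B" unfolding B_def by (rule herm_self_real[OF H])
  have hc: "herm H c c = complex_of_real C" unfolding C_def by (rule herm_self_real[OF H])
  have hba: "herm H b a = cnj (herm H a b)" by (rule herm_cnj[OF H])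
  have hcb: "herm H c b = cnj (herm H b c)" by (rule herm_cnj[OF H])
  have hac: "herm H a c = cnj (herm H c a)" by (rule herm_cnj[OF H])
  have g: "complex_of_real A * (complex_of_real B * complex_of_real C - herm H b c * cnj (herm H b c))
     - herm H a b * (cnj (herm H a b) * complex_of_real C - herm H b c * herm H c a)
     + cnj (herm H c a) * (cnj (herm H a b) * cnj (herm H b c) - complex_of_real B * herm H c a) = 0"
    using gram3[of H a a b b c c] by (simp only: ha hb hc hba hcb hac)
  have "2 * Re (herm H a b * herm H b c * herm H c a) = A * (cmod (herm H b c))^2 + B*(cmod (herm H c a))^2 + C*(cmod (herm H a b))^2 - A*B*C"
    by (rule re_id[OF g])
  then show ?thesis unfolding gT_def A_def B_def C_def by simp
qed

lemma gT_Re_facts: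
  assumes H: "hermitian_sig11 H" and a: "a \<in> cdisc H" and b: "b \<in> cdisc H" and c: "c \<in> cdisc H"
  shows "Re (gT H a b c) \<ge> 0"
    and "gT H a b c \<noteq> 0 \<Longrightarrow> Re (gT H a b c) = 0 \<Longrightarrow> herm H a a = 0 \<and> herm H b b = 0 \<and> herm H c c = 0"
proof -
  define A where "A = Re (herm H a a)"
  define B where "B = Re (herm H b b)"
  define C where "C = Re (herm H c c)"
  define X where "X = (cmod (herm H a b))^2"
  define Y where "Y = (cmod (herm H b c))^2"
  define Z where "Z = (cmod (herm H c a))^2"
  have A: "A \<le> 0" and B: "B \<le> 0" and C: "C \<le> 0" using a b c by (auto simp: cdisc_def A_def B_def C_def)
  have X: "X \<ge> 0" and Y: "Y \<ge> 0" and Z: "Z \<ge> 0" by (auto simp: X_def Y_def Z_def)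
  have BC: "B * C \<le> Y" unfolding B_def C_def Y_def by (rule rcs[OF H])
  have e: "2 * Re (gT H a b c) = (-A) * (Y - B * C) + (-B) * Z + (-C) * X"
    using gT_re2[OF H, of a b c] unfolding A_def B_def C_def X_def Y_def Z_def by (simp add: algebra_simps)
  have "A * (Y - B * C) \<le> 0" using A BC by (intro mult_nonpos_nonneg) auto
  then have t1: "(-A) * (Y - B * C) \<ge> 0" by simp
  have t2: "(-B) * Z \<ge> 0" using B Z by (simp add: mult_nonpos_nonneg)
  have t3: "(-C) * X \<ge> 0" using C X by (simp add: mult_nonpos_nonneg)
  show "Re (gT H a b c) \<ge> 0" using e t1 t2 t3 by linarith
  assume nz: "gT H a b c \<noteq> 0" and r0: "Re (gT H a b c) = 0"
  have nab: "herm H a b \<noteq> 0" and nbc: "herm H b c \<noteq> 0" and nca: "herm H c a \<noteq> 0"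
    using nz by (auto simp: gT_def)
  have Xp: "X > 0" and Yp: "Y > 0" and Zp: "Z > 0" using nab nbc nca by (auto simp: X_def Y_def Z_def)
  have "(-A) * (Y - B * C) = 0" "(-B) * Z = 0" "(-C) * X = 0" using e t1 t2 t3 r0 by linarith+
  then have B0: "B = 0" and C0: "C = 0" and "(-A) * Y = 0" using Xp Zp by auto
  then have A0: "A = 0" using Yp by simp
  show "herm H a a = 0 \<and> herm H b b = 0 \<and> herm H c c = 0"
    using A0 B0 C0 herm_self_real[OF H, of a] herm_self_real[OF H, of b] herm_self_real[OF H, of c]
    unfolding A_def B_def C_def by simp
qed

lemma Arg_zero_if_real_nonneg:
  assumes "z \<in> \<real>" "Re z \<ge> 0"
  shows "Arg z = 0"
  using assms Arg_eq_0 by blast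

lemma tA_antisym:
  assumes H: "hermitian_sig11 H" and a: "a \<in> cdisc H" and b: "b \<in> cdisc H" and c: "c \<in> cdisc H"
  shows "tA H a c b = - tA H a b c"
proof -
  have r: "Re (gT H a b c) \<ge> 0" by (rule gT_Re_facts(1)[OF H a b c])
  have s: "gT H a c b = cnj (gT H a b c)" by (rule gT_swap[OF H])
  show ?thesis
  proof (cases "gT H a b c \<in> \<real>")
    case True
    then have z: "Arg (gT H a b c) = 0" using r Arg_zero_if_real_nonneg by blast
    have "Arg (gT H a c b) = 0" unfolding s Arg_cnj using True z by simp
    then show ?thesis using z by (simp add: tA_def)
  next
    case False
    have "Arg (gT H a c b) = - Arg (gT H a b c)" unfolding s Arg_cnj using False by simp
    then show ?thesis by (simp add: tA_def)
  qed
qed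

lemma tA_aab:
  assumes H: "hermitian_sig11 H" and a: "a \<in> cdisc H"
  shows "tA H a a b = 0"
proof -
  have "gT H a a b = - (herm H a a * (herm H a b * cnj (herm H a b)))"
    by (simp add: gT_def herm_cnj[OF H, of b a] algebra_simps)
  also have "\<dots> = complex_of_real (- (Re (herm H a a) * (cmod (herm H a b))^2))"
    by (subst herm_self_real[OF H, of a]) (simp only: complex_norm_square[symmetric] of_real_mult of_real_minus)
  finally have e: "gT H a a b = complex_of_real (- (Re (herm H a a) * (cmod (herm H a b))^2))" .
  have "Re (herm H a a) \<le> 0" using a by (simp add: cdisc_def)
  then have "- (Re (herm H a a) * (cmod (herm H a b))^2) \<ge> 0" by (simp add: mult_nonpos_nonneg)
  then show ?thesis unfolding tA_def e Arg_of_real by simp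
qed

lemma tA_aba: "hermitian_sig11 H \<Longrightarrow> a \<in> cdisc H \<Longrightarrow> tA H a b a = 0"
  by (metis tA_aab tA_cyc)

lemma tA_baa: "hermitian_sig11 H \<Longrightarrow> a \<in> cdisc H \<Longrightarrow> tA H b a a = 0"
  by (metis tA_aab tA_cyc)

section \<open>Cocycle identity\<close>

lemma herm_zero_prop:
  assumes H: "hermitian_sig11 H" and x: "x \<in> cdisc H" and y: "y \<in> cdisc H" and z: "herm H x y = 0"
  shows "\<exists>k. k \<noteq> 0 \<and> y = k *s x"
proof -
  have "eq_iso H x y" by (rule herm_zero_eq_iso[OF H x y z])
  then obtain c where c: "c \<noteq> 0" "x = c *s y" unfolding eq_iso_def proj_eq_def by blast
  then have "y = (1/c) *s x" by (simp add: vector_smult_assoc)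
  then show ?thesis using c by (intro exI[of _ "1/c"]) simp
qed

lemma herm_zero_sym:
  assumes H: "hermitian_sig11 H" and "herm H y x = 0"
  shows "herm H x y = 0"
  using assms herm_cnj[OF H, of x y] by simp

lemma cdisc_scale: "x \<in> cdisc H \<Longrightarrow> k \<noteq> 0 \<Longrightarrow> k *s x \<in> cdisc H"
proof -
  assume x: "x \<in> cdisc H" and k: "k \<noteq> 0"
  have "herm H (k *s x) (k *s x) = k * (cnj k * herm H x x)"
    by (simp add: herm_scale_l herm_scale_r)
  also have "\<dots> = complex_of_real ((cmod k)^2) * herm H x x"
    by (simp only: mult.assoc[symmetric] complex_norm_square)
  finally have "herm H (k *s x) (k *s x) = complex_of_real ((cmod k)^2) * herm H x x" .
  then have "Re (herm H (k *s x) (k *s x)) = (cmod k)^2 * Re (herm H x x)" by simp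
  moreover have "k *s x \<noteq> 0" using x k by (auto simp: cdisc_def)
  ultimately show ?thesis using x by (simp add: cdisc_def mult_nonneg_nonpos)
qed

lemma cocycle_degenerate:
  assumes H: "hermitian_sig11 H" and a: "a \<in> cdisc H" and b: "b \<in> cdisc H" and c: "c \<in> cdisc H" and d: "d \<in> cdisc H"
    and z: "herm H a b = 0 \<or> herm H a c = 0 \<or> herm H a d = 0 \<or> herm H b c = 0 \<or> herm H b d = 0 \<or> herm H c d = 0"
  shows "tA H b c d - tA H a c d + tA H a b d - tA H a b c = 0"
proof -
  note aab = tA_aab[OF H] and aba = tA_aba[OF H] and baa = tA_baa[OF H]
  consider "herm H a b = 0" | "herm H a c = 0" | "herm H a d = 0" | "herm H b c = 0" | "herm H b d = 0" | "herm H c d = 0"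
    using z by blast
  then show ?thesis
  proof cases
    case 1
    then obtain k where k: "k \<noteq> 0" "b = k *s a" using herm_zero_prop[OF H a b] by blast
    show ?thesis using k a by (simp add: tA_scale1 tA_scale2 aab)
  next
    case 2
    then obtain k where k: "k \<noteq> 0" "c = k *s a" using herm_zero_prop[OF H a c] by blast
    have "tA H b a d = - tA H a b d" using tA_antisym[OF H a b d] tA_cyc[of H b a d] by simp
    then show ?thesis using k a by (simp add: tA_scale1 tA_scale2 tA_scale3 aab aba)
  next
    case 3
    then obtain k where k: "k \<noteq> 0" "d = k *s a" using herm_zero_prop[OF H a d] by blast
    have "tA H b c a = tA H a b c" using tA_cyc[of H a b c] by simp
    then show ?thesis using k a by (simp add: tA_scale3 aba)
  next
    case 4
    then obtain k where k: "k \<noteq> 0" "c = k *s b" using herm_zero_prop[OF H b c] by blast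
    show ?thesis using k b by (simp add: tA_scale2 tA_scale3 aab baa)
  next
    case 5
    then obtain k where k: "k \<noteq> 0" "d = k *s b" using herm_zero_prop[OF H b d] by blast
    have "tA H a c b = - tA H a b c" by (rule tA_antisym[OF H a b c])
    then show ?thesis using k b by (simp add: tA_scale3 aba baa)
  next
    case 6
    then obtain k where k: "k \<noteq> 0" "d = k *s c" using herm_zero_prop[OF H c d] by blast
    show ?thesis using k c by (simp add: tA_scale3 baa)
  qed
qed

lemma gT_zero_cases:
  assumes H: "hermitian_sig11 H" and "gT H x y z = 0"
  shows "herm H x y = 0 \<or> herm H y z = 0 \<or> herm H x z = 0"
proof -
  have "herm H x y = 0 \<or> herm H y z = 0 \<or> herm H z x = 0" using assms(2) by (simp add: gT_def)
  then show ?thesis using herm_zero_sym[OF H, of z x] by blast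
qed

lemma Arg_half_pi:
  assumes "Arg z = pi / 2"
  shows "z = complex_of_real (cmod z) * \<i>"
  by (metis assms cis_pi_half rcis_cmod_Arg rcis_def)

lemma Arg_mhalf_pi:
  assumes "Arg z = - (pi / 2)"
  shows "z = - (complex_of_real (cmod z) * \<i>)"
proof -
  have "cis (- (pi/2)) = - \<i>" using cis_cnj[of "pi/2"] by simp
  then show ?thesis by (metis assms mult_minus_right rcis_cmod_Arg rcis_def)
qed

lemma Arg_pm_half:
  assumes s: "s = 1 \<or> s = -1" and A: "Arg z = s * (pi/2)"
  shows "z = complex_of_real (s * cmod z) * \<i>"
proof (cases "s = 1")
  case True
  have e: "z = complex_of_real (cmod z) * \<i>" by (rule Arg_half_pi) (use A True in simp)
  show ?thesis by (simp only: True mult_1_left) (fact e)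
next
  case False
  then have s1: "s = -1" using s by simp
  have e: "z = - (complex_of_real (cmod z) * \<i>)" by (rule Arg_mhalf_pi) (use A s1 in simp)
  have "complex_of_real (s * cmod z) * \<i> = - (complex_of_real (cmod z) * \<i>)" using s1 by simp
  then show ?thesis using e by simp
qed

lemma ideal_identity:
  assumes H: "hermitian_sig11 H" and aa: "herm H a a = 0" and bb: "herm H b b = 0"
  shows "(herm H a b * herm H b a) * (herm H c d * herm H d c) * (herm H a d * herm H d a) * (herm H a c * herm H c a)
       = gT H a d c * (gT H a b d * (herm H a c * herm H c a) + gT H a c b * (herm H a d * herm H d a))"
proof -
  have R: "- herm H a b * (herm H b a * herm H c d - herm H b d * herm H c a) + herm H a d * (herm H b a * herm H c b) = 0"
    using gram3[of H a a b b c d] aa bb by simp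
  have "(herm H a b * herm H b a) * (herm H c d * herm H d c) * (herm H a d * herm H d a) * (herm H a c * herm H c a)
       - gT H a d c * (gT H a b d * (herm H a c * herm H c a) + gT H a c b * (herm H a d * herm H d a))
       = - (- herm H a b * (herm H b a * herm H c d - herm H b d * herm H c a) + herm H a d * (herm H b a * herm H c b))
         * (herm H d c * herm H a d * herm H d a * herm H a c * herm H c a)"
    by (simp add: gT_def algebra_simps)
  then show ?thesis using R by simp
qed

lemma ideal_contra:
  assumes H: "hermitian_sig11 H" and aa: "herm H a a = 0" and bb: "herm H b b = 0"
    and s: "s = 1 \<or> s = -1"
    and t2: "gT H a c d = complex_of_real ((-s) * t2) * \<i>" and t3: "gT H a b d = complex_of_real (s * t3) * \<i>"
    and t4: "gT H a b c = complex_of_real ((-s) * t4) * \<i>"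
    and pos: "t2 > 0" "t3 > 0" "t4 > 0" and ac: "herm H a c \<noteq> 0"
  shows False
proof -
  have e2: "gT H a d c = complex_of_real (s * t2) * \<i>" unfolding gT_swap[OF H, of a d c] t2 by simp
  have e4: "gT H a c b = complex_of_real (s * t4) * \<i>" unfolding gT_swap[OF H, of a c b] t4 by simp
  have sq: "\<And>x y. herm H x y * herm H y x = complex_of_real ((cmod (herm H x y))^2)"
  proof -
    fix x y
    show "herm H x y * herm H y x = complex_of_real ((cmod (herm H x y))^2)"
      by (simp only: herm_cnj[OF H, of y x] complex_norm_square)
  qed
  have L: "(herm H a b * herm H b a) * (herm H c d * herm H d c) * (herm H a d * herm H d a) * (herm H a c * herm H c a)
     = complex_of_real ((cmod (herm H a b))^2 * (cmod (herm H c d))^2 * (cmod (herm H a d))^2 * (cmod (herm H a c))^2)"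
    by (simp only: sq of_real_mult)
  have ss: "s * s = 1" using s by auto
  have Rr: "gT H a d c * (gT H a b d * (herm H a c * herm H c a) + gT H a c b * (herm H a d * herm H d a))
     = complex_of_real (- (t2 * (t3 * (cmod (herm H a c))^2 + t4 * (cmod (herm H a d))^2)))"
  proof -
    have "gT H a d c * (gT H a b d * (herm H a c * herm H c a) + gT H a c b * (herm H a d * herm H d a))
       = complex_of_real (s * s) * (\<i> * \<i>) * complex_of_real (t2 * (t3 * (cmod (herm H a c))^2 + t4 * (cmod (herm H a d))^2))"
      unfolding e2 e4 t3 sq by (simp add: algebra_simps)
    then show ?thesis using ss by simp
  qed
  have "(cmod (herm H a b))^2 * (cmod (herm H c d))^2 * (cmod (herm H a d))^2 * (cmod (herm H a c))^2
      = - (t2 * (t3 * (cmod (herm H a c))^2 + t4 * (cmod (herm H a d))^2))"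
    using ideal_identity[OF H aa bb, of c d] unfolding L Rr by (simp only: of_real_eq_iff)
  moreover have "(cmod (herm H a b))^2 * (cmod (herm H c d))^2 * (cmod (herm H a d))^2 * (cmod (herm H a c))^2 \<ge> 0"
    by simp
  moreover have "t2 * (t3 * (cmod (herm H a c))^2 + t4 * (cmod (herm H a d))^2) > 0"
    using pos ac by (simp add: add_pos_nonneg)
  ultimately show False by linarith
qed

lemma sgn_cnj_c: "sgn (cnj z) = cnj (sgn z)"
  by (simp add: sgn_div_norm)

lemma prod12: "(- (bc * cd * db)) * (- (ad * dc * ca)) * (- (ab * bd * da)) * (- (ac * cb * ba)) =
  (bc * cb) * (cd * dc) * (db * bd) * ((ad * da) * (ca * ac) * (ab * ba :: complex))"
  by (simp add: algebra_simps)

lemma cocycle: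
  assumes H: "hermitian_sig11 H" and a: "a \<in> cdisc H" and b: "b \<in> cdisc H" and c: "c \<in> cdisc H" and d: "d \<in> cdisc H"
  shows "tA H b c d - tA H a c d + tA H a b d - tA H a b c = 0"
proof (cases "gT H b c d = 0 \<or> gT H a c d = 0 \<or> gT H a b d = 0 \<or> gT H a b c = 0")
  case True
  then have "herm H a b = 0 \<or> herm H a c = 0 \<or> herm H a d = 0 \<or> herm H b c = 0 \<or> herm H b d = 0 \<or> herm H c d = 0"
    using gT_zero_cases[OF H, of b c d] gT_zero_cases[OF H, of a c d] gT_zero_cases[OF H, of a b d]
      gT_zero_cases[OF H, of a b c] herm_zero_sym[OF H] by blast
  then show ?thesis by (rule cocycle_degenerate[OF H a b c d])
next
  case False
  define T1 where "T1 = gT H b c d"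
  define T2 where "T2 = gT H a c d"
  define T3 where "T3 = gT H a b d"
  define T4 where "T4 = gT H a b c"
  have nz: "T1 \<noteq> 0" "T2 \<noteq> 0" "T3 \<noteq> 0" "T4 \<noteq> 0" using False by (auto simp: T1_def T2_def T3_def T4_def)
  have re: "Re T1 \<ge> 0" "Re T2 \<ge> 0" "Re T3 \<ge> 0" "Re T4 \<ge> 0"
    unfolding T1_def T2_def T3_def T4_def
    by (rule gT_Re_facts(1)[OF H b c d], rule gT_Re_facts(1)[OF H a c d], rule gT_Re_facts(1)[OF H a b d],
        rule gT_Re_facts(1)[OF H a b c])
  have bnd: "\<bar>Arg T1\<bar> \<le> pi/2" "\<bar>Arg T2\<bar> \<le> pi/2" "\<bar>Arg T3\<bar> \<le> pi/2" "\<bar>Arg T4\<bar> \<le> pi/2"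
    using re by (simp_all only: Arg_Re_nonneg)
  define x where "x = Arg T1 - Arg T2 + Arg T3 - Arg T4"
  have sq: "\<And>x y. herm H x y * herm H y x = complex_of_real ((cmod (herm H x y))^2)"
  proof -
    fix x y
    show "herm H x y * herm H y x = complex_of_real ((cmod (herm H x y))^2)"
      by (simp only: herm_cnj[OF H, of y x] complex_norm_square)
  qed
  have P: "T1 * cnj T2 * T3 * cnj T4 = complex_of_real ((cmod (herm H b c))^2 * (cmod (herm H c d))^2 * (cmod (herm H d b))^2
         * ((cmod (herm H a d))^2 * (cmod (herm H c a))^2 * (cmod (herm H a b))^2))"
  proof -
    have "T1 * cnj T2 * T3 * cnj T4 = gT H b c d * gT H a d c * gT H a b d * gT H a c b"
      unfolding T1_def T2_def T3_def T4_def by (simp add: gT_swap[OF H, of a d c] gT_swap[OF H, of a c b])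
    also have "\<dots> = (herm H b c * herm H c b) * (herm H c d * herm H d c) * (herm H d b * herm H b d)
        * ((herm H a d * herm H d a) * (herm H c a * herm H a c) * (herm H a b * herm H b a))"
      unfolding gT_def by (rule prod12)
    also have "\<dots> = complex_of_real ((cmod (herm H b c))^2 * (cmod (herm H c d))^2 * (cmod (herm H d b))^2
         * ((cmod (herm H a d))^2 * (cmod (herm H c a))^2 * (cmod (herm H a b))^2))"
      by (simp only: sq of_real_mult)
    finally show ?thesis .
  qed
  have Pnz: "T1 * cnj T2 * T3 * cnj T4 \<noteq> 0" using nz by simp
  have "(cmod (herm H b c))^2 * (cmod (herm H c d))^2 * (cmod (herm H d b))^2
         * ((cmod (herm H a d))^2 * (cmod (herm H c a))^2 * (cmod (herm H a b))^2) > 0"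
    using Pnz unfolding P by (simp add: zero_less_mult_iff)
  then have sP: "sgn (T1 * cnj T2 * T3 * cnj T4) = 1" unfolding P sgn_of_real by simp
  have "cis x = cis (Arg T1) * cnj (cis (Arg T2)) * cis (Arg T3) * cnj (cis (Arg T4))"
    unfolding x_def cis_cnj cis_mult by (simp add: algebra_simps)
  also have "\<dots> = sgn (T1 * cnj T2 * T3 * cnj T4)"
    using nz by (simp add: cis_Arg sgn_mult sgn_cnj_c)
  finally have "cis x = 1" using sP by simp
  then have "exp (\<i> * complex_of_real x) = 1" by (simp add: cis_conv_exp)
  then have "\<exists>n::int. Im (\<i> * complex_of_real x) = of_int (2 * n) * pi" unfolding exp_eq_1 by blast
  then obtain n :: int where n: "x = of_int (2 * n) * pi" by auto
  have xb: "\<bar>x\<bar> \<le> 2 * pi" using bnd unfolding x_def by linarith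
  have n1: "n \<le> 1"
  proof (rule ccontr)
    assume "\<not> n \<le> 1"
    then have "real_of_int (2 * n) \<ge> 4" by simp
    then have "real_of_int (2 * n) * pi \<ge> 4 * pi" by (rule mult_right_mono) (use pi_gt_zero in linarith)
    then show False using xb n pi_gt_zero by linarith
  qed
  have n2: "n \<ge> -1"
  proof (rule ccontr)
    assume "\<not> n \<ge> -1"
    then have "real_of_int (2 * n) \<le> -4" by simp
    then have "real_of_int (2 * n) * pi \<le> -4 * pi" by (rule mult_right_mono) (use pi_gt_zero in linarith)
    then show False using xb n pi_gt_zero by linarith
  qed
  have ex: "n = 0 \<or> n = 1 \<or> n = -1" using n1 n2 by linarith
  have half: "\<And>T. T \<noteq> 0 \<Longrightarrow> \<bar>Arg T\<bar> = pi/2 \<Longrightarrow> Re T = 0"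
  proof -
    fix T :: complex assume "T \<noteq> 0" "\<bar>Arg T\<bar> = pi/2"
    then have "\<not> (Re T > 0)" using Arg_Re_pos[of T] by linarith
    moreover have "Re T \<ge> 0" using Arg_Re_nonneg[of T] \<open>\<bar>Arg T\<bar> = pi/2\<close> by simp
    ultimately show "Re T = 0" by simp
  qed
  have contra: False if s: "s = 1 \<or> s = -1" and A2: "Arg T2 = (-s) * (pi/2)" and A3: "Arg T3 = s * (pi/2)"
    and A4: "Arg T4 = (-s) * (pi/2)" for s :: real
  proof -
    have ms: "-s = 1 \<or> -s = -1" using s by auto
    have "\<bar>Arg T4\<bar> = pi/2" using A4 s by auto
    then have "Re T4 = 0" using half nz by blast
    then have iso: "herm H a a = 0 \<and> herm H b b = 0 \<and> herm H c c = 0"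
      using gT_Re_facts(2)[OF H a b c] nz unfolding T4_def by blast
    have ac: "herm H a c \<noteq> 0" using nz(4) herm_zero_sym[OF H, of a c] unfolding T4_def gT_def by auto
    have r2: "T2 = complex_of_real ((-s) * cmod T2) * \<i>" by (rule Arg_pm_half[OF ms A2])
    have r3: "T3 = complex_of_real (s * cmod T3) * \<i>" by (rule Arg_pm_half[OF s A3])
    have r4: "T4 = complex_of_real ((-s) * cmod T4) * \<i>" by (rule Arg_pm_half[OF ms A4])
    have p: "cmod T2 > 0" "cmod T3 > 0" "cmod T4 > 0" using nz by auto
    have iso1: "herm H a a = 0" and iso2: "herm H b b = 0" using iso by auto
    show False
      by (rule ideal_contra[OF H iso1 iso2 s r2[unfolded T2_def] r3[unfolded T3_def] r4[unfolded T4_def]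
            p[unfolded T2_def T3_def T4_def] ac])
  qed
  have "x = 0"
  proof -
    { assume "n = 1"
      then have "x = 2 * pi" using n by simp
      then have "Arg T2 = (-1) * (pi/2)" "Arg T3 = 1 * (pi/2)" "Arg T4 = (-1) * (pi/2)"
        using bnd unfolding x_def by linarith+
      then have False using contra[of 1] by simp }
    moreover
    { assume "n = -1"
      then have "x = - 2 * pi" using n by simp
      then have "Arg T2 = (- (-1)) * (pi/2)" "Arg T3 = (-1) * (pi/2)" "Arg T4 = (- (-1)) * (pi/2)"
        using bnd unfolding x_def by linarith+
      then have False using contra[of "-1"] by simp }
    ultimately show ?thesis using ex n by auto
  qed
  then show ?thesis unfolding tA_def x_def T1_def T2_def T3_def T4_def by simp
qed

section \<open>Polygon sums\<close>

definition psum :: "complex^2^2 \<Rightarrow> complex^2 \<Rightarrow> (nat \<Rightarrow> complex^2) \<Rightarrow> nat \<Rightarrow> real" where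
  "psum H c X N = (\<Sum>k<N. tA H c (X k) (X ((k+1) mod N)))"

lemma sum_shift1:
  assumes "(N::nat) > 0"
  shows "(\<Sum>k<N. f ((k+1) mod N)) = (\<Sum>k<N. (f k :: real))"
proof -
  obtain M where M: "N = Suc M" using assms gr0_implies_Suc by blast
  have "(\<Sum>k<Suc M. f ((k+1) mod Suc M)) = (\<Sum>k<M. f ((k+1) mod Suc M)) + f ((M+1) mod Suc M)"
    by simp
  also have "(\<Sum>k<M. f ((k+1) mod Suc M)) = (\<Sum>k<M. f (Suc k))"
    by (rule sum.cong) auto
  also have "f ((M+1) mod Suc M) = f 0" by simp
  also have "(\<Sum>k<M. f (Suc k)) + f 0 = (\<Sum>k<Suc M. f k)"
    by (subst sum.lessThan_Suc_shift) (rule add.commute)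
  finally show ?thesis using M by simp
qed

lemma sum_shift:
  assumes "(N::nat) > 0"
  shows "(\<Sum>k<N. f ((k + s) mod N)) = (\<Sum>k<N. (f k :: real))"
proof (induction s)
  case 0
  show ?case by (rule sum.cong) auto
next
  case (Suc s)
  have "(\<Sum>k<N. f ((k + Suc s) mod N)) = (\<Sum>k<N. (\<lambda>t. f ((t + s) mod N)) ((k+1) mod N))"
    by (rule sum.cong) (simp_all add: mod_add_left_eq)
  also have "\<dots> = (\<Sum>k<N. f ((k + s) mod N))" by (rule sum_shift1[OF assms])
  finally show ?case using Suc by simp
qed

lemma base_change:
  assumes H: "hermitian_sig11 H" and c: "c \<in> cdisc H" and c': "c' \<in> cdisc H"
    and X: "\<forall>k<N. X k \<in> cdisc H" and N: "N > 0"
  shows "psum H c X N = psum H c' X N"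
proof -
  have Xm: "\<And>k. X (k mod N) \<in> cdisc H" using X N by simp
  have t: "\<And>k. k < N \<Longrightarrow> tA H c (X k) (X ((k+1) mod N)) = tA H c' (X k) (X ((k+1) mod N))
       + (tA H c c' (X ((k+1) mod N)) - tA H c c' (X k))"
  proof -
    fix k assume k: "k < N"
    have xk: "X k \<in> cdisc H" using X k by simp
    show "tA H c (X k) (X ((k+1) mod N)) = tA H c' (X k) (X ((k+1) mod N))
       + (tA H c c' (X ((k+1) mod N)) - tA H c c' (X k))"
      using cocycle[OF H c c' xk Xm[of "k+1"]] by linarith
  qed
  have "psum H c X N = (\<Sum>k<N. tA H c' (X k) (X ((k+1) mod N)) + (tA H c c' (X ((k+1) mod N)) - tA H c c' (X k)))"
    unfolding psum_def by (rule sum.cong[OF HOL.refl]) (rule t, simp)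
  also have "\<dots> = (\<Sum>k<N. tA H c' (X k) (X ((k+1) mod N))) + (\<Sum>k<N. tA H c c' (X ((k+1) mod N)) - tA H c c' (X k))"
    by (simp only: sum.distrib)
  also have "(\<Sum>k<N. tA H c c' (X ((k+1) mod N)) - tA H c c' (X k)) = 0"
    using sum_shift1[OF N, of "\<lambda>t. tA H c c' (X t)"] by (simp add: sum_subtractf)
  finally show ?thesis unfolding psum_def by simp
qed

lemma mod_pred:
  assumes "(k::nat) < N"
  shows "((k + 1) mod N + N - 1) mod N = k"
proof (cases "k + 1 < N")
  case True
  then have "(k + 1) mod N + N - 1 = k + N" by simp
  then show ?thesis using assms by simp
next
  case False
  then have "k + 1 = N" using assms by simp
  then show ?thesis by simp
qed

lemma edge_change:
  assumes H: "hermitian_sig11 H" and c: "c \<in> cdisc H" and a: "a \<in> cdisc H" and a': "a' \<in> cdisc H"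
    and b: "b \<in> cdisc H" and b': "b' \<in> cdisc H" and o: "a = a' \<or> b = b'"
  shows "tA H c a b - tA H c a' b' = tA H c a a' - tA H c b b' - tA H a a' b + tA H b b' a"
proof (cases "a = a'")
  case True
  have z1: "tA H c a a = 0" by (rule tA_baa[OF H a])
  have z2: "tA H a a b = 0" by (rule tA_aab[OF H a])
  have cy: "tA H a b b' = tA H b b' a" by (rule tA_cyc)
  show ?thesis using cocycle[OF H c a b b'] z1 z2 cy unfolding True[symmetric] by linarith
next
  case False
  then have bb: "b = b'" using o by simp
  have z1: "tA H c b b = 0" by (rule tA_baa[OF H b])
  have z2: "tA H b b a = 0" by (rule tA_aab[OF H b])
  show ?thesis using cocycle[OF H c a a' b] z1 z2 unfolding bb[symmetric] by linarith
qed

lemma poly_change: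
  assumes H: "hermitian_sig11 H" and c: "c \<in> cdisc H"
    and X: "\<forall>k<N. X k \<in> cdisc H" and X': "\<forall>k<N. X' k \<in> cdisc H" and N: "N > 0"
    and adj: "\<forall>k<N. X k = X' k \<or> X ((k+1) mod N) = X' ((k+1) mod N)"
  shows "psum H c X N - psum H c X' N =
     (\<Sum>k<N. tA H (X k) (X' k) (X ((k+N-1) mod N))) - (\<Sum>k<N. tA H (X k) (X' k) (X ((k+1) mod N)))"
proof -
  define phi where "phi t = tA H c (X t) (X' t)" for t
  have e: "tA H c (X k) (X ((k+1) mod N)) - tA H c (X' k) (X' ((k+1) mod N))
      = phi k - phi ((k+1) mod N) - tA H (X k) (X' k) (X ((k+1) mod N))
        + tA H (X ((k+1) mod N)) (X' ((k+1) mod N)) (X k)" if k: "k < N" for k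
  proof -
    have k1: "(k+1) mod N < N" using N by simp
    show ?thesis unfolding phi_def
      by (rule edge_change[OF H c]) (use X X' k k1 adj in \<open>simp_all\<close>)
  qed
  have "psum H c X N - psum H c X' N = (\<Sum>k<N. tA H c (X k) (X ((k+1) mod N)) - tA H c (X' k) (X' ((k+1) mod N)))"
    unfolding psum_def by (simp add: sum_subtractf)
  also have "\<dots> = (\<Sum>k<N. (phi k - phi ((k+1) mod N)) - tA H (X k) (X' k) (X ((k+1) mod N))
        + tA H (X ((k+1) mod N)) (X' ((k+1) mod N)) (X k))"
    by (rule sum.cong[OF HOL.refl]) (rule e, simp)
  also have "\<dots> = (\<Sum>k<N. phi k - phi ((k+1) mod N)) - (\<Sum>k<N. tA H (X k) (X' k) (X ((k+1) mod N)))
        + (\<Sum>k<N. tA H (X ((k+1) mod N)) (X' ((k+1) mod N)) (X k))"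
    by (simp only: sum.distrib sum_subtractf)
  also have "(\<Sum>k<N. phi k - phi ((k+1) mod N)) = 0"
    using sum_shift1[OF N, of phi] by (simp add: sum_subtractf)
  also have "(\<Sum>k<N. tA H (X ((k+1) mod N)) (X' ((k+1) mod N)) (X k))
      = (\<Sum>k<N. (\<lambda>t. tA H (X t) (X' t) (X ((t+N-1) mod N))) ((k+1) mod N))"
  proof (rule sum.cong[OF HOL.refl])
    fix k assume "k \<in> {..<N}"
    then have "((k + 1) mod N + N - 1) mod N = k" using mod_pred[of k N] by simp
    then show "tA H (X ((k+1) mod N)) (X' ((k+1) mod N)) (X k)
      = (\<lambda>t. tA H (X t) (X' t) (X ((t+N-1) mod N))) ((k+1) mod N)" by simp
  qed
  also have "\<dots> = (\<Sum>k<N. tA H (X k) (X' k) (X ((k+N-1) mod N)))"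
    by (rule sum_shift1[OF N])
  finally show ?thesis by simp
qed

section \<open>Word identities\<close>

declare hn_eq.trans[trans]

lemma hn_congr: "hn_eq n u v \<Longrightarrow> hn_eq n (x @ u @ y) (x @ v @ y)"
proof (induction rule: hn_eq.induct)
  case (refl u)
  show ?case by (rule hn_eq.refl)
next
  case (sym u v)
  show ?case by (rule hn_eq.sym[OF sym.IH])
next
  case (trans u v w)
  then show ?case by (blast intro: hn_eq.trans)
next
  case (sq i u v)
  have "hn_eq n ((x @ u) @ [i, i] @ (v @ y)) ((x @ u) @ (v @ y))" by (rule hn_eq.sq[OF sq])
  then show ?case by simp
next
  case (rel u v)
  have "hn_eq n ((x @ u) @ rev [1..<n+1] @ (v @ y)) ((x @ u) @ (v @ y))" by (rule hn_eq.rel)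
  then show ?case by simp
qed

lemma hn_pair: "i \<in> {1..n} \<Longrightarrow> hn_eq n (x @ i # i # y) (x @ y)"
  using hn_eq.sq[of i n x y] by simp

lemma hn_cancel: "set u \<subseteq> {1..n} \<Longrightarrow> hn_eq n (x @ rev u @ u @ y) (x @ y)"
proof (induction u arbitrary: x y)
  case Nil
  show ?case by (simp add: hn_eq.refl)
next
  case (Cons a u)
  have a: "a \<in> {1..n}" and su: "set u \<subseteq> {1..n}" using Cons.prems by auto
  have "hn_eq n ((x @ rev u) @ a # a # (u @ y)) ((x @ rev u) @ (u @ y))" by (rule hn_pair[OF a])
  then have "hn_eq n (x @ rev (a # u) @ (a # u) @ y) (x @ rev u @ u @ y)" by simp
  also have "hn_eq n (x @ rev u @ u @ y) (x @ y)" by (rule Cons.IH[OF su])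
  finally show ?case .
qed

lemma hn_cancel2: "set u \<subseteq> {1..n} \<Longrightarrow> hn_eq n (x @ u @ rev u @ y) (x @ y)"
  using hn_cancel[of "rev u" n x y] by simp

lemma hn_rel: "hn_eq n (x @ vword n @ y) (x @ y)"
  unfolding vword_def by (rule hn_eq.rel)

lemma hn_rev: "hn_eq n u v \<Longrightarrow> hn_eq n (rev u) (rev v)"
proof (induction rule: hn_eq.induct)
  case (refl u)
  show ?case by (rule hn_eq.refl)
next
  case (sym u v)
  show ?case by (rule hn_eq.sym[OF sym.IH])
next
  case (trans u v w)
  then show ?case by (blast intro: hn_eq.trans)
next
  case (sq i u v)
  have "hn_eq n (rev v @ [i, i] @ rev u) (rev v @ rev u)" by (rule hn_eq.sq[OF sq])
  then show ?case by simp
next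
  case (rel u v)
  have s: "set [1..<n+1] \<subseteq> {1..n}" by auto
  have "hn_eq n ((rev v @ [1..<n+1]) @ rev [1..<n+1] @ rev u) ((rev v @ [1..<n+1]) @ rev u)"
    by (rule hn_eq.rel)
  from hn_eq.sym[OF this] have "hn_eq n (rev v @ [1..<n+1] @ rev u) (rev v @ [1..<n+1] @ rev [1..<n+1] @ rev u)"
    by simp
  also have "hn_eq n (rev v @ [1..<n+1] @ rev [1..<n+1] @ rev u) (rev v @ rev u)"
    by (rule hn_cancel2[OF s])
  finally show ?case by simp
qed

lemma shift_range: "n \<ge> 1 \<Longrightarrow> i \<in> {1..n} \<Longrightarrow> shift n i \<in> {1..n}"
  by (auto simp: shift_def)

lemma map_shift_rel:
  assumes "n \<ge> 1"
  shows "map (shift n) (rev [1..<n+1]) = 1 # rev [2..<n+1]"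
proof -
  have e: "[1..<n+1] = [1..<n] @ [n]" using assms by simp
  have "map (shift n) [1..<n] = map Suc [1..<n]"
    by (rule map_cong) (auto simp: shift_def)
  also have "\<dots> = [2..<n+1]" by (simp add: map_Suc_upt numeral_2_eq_2)
  finally have m: "map (shift n) [1..<n] = [2..<n+1]" .
  have "map (shift n) (rev [1..<n]) = rev [2..<n+1]"
    by (simp only: rev_map[symmetric] m)
  then show ?thesis unfolding e by (simp add: shift_def)
qed

lemma hn_shift:
  assumes n: "n \<ge> 1"
  shows "hn_eq n u v \<Longrightarrow> hn_eq n (map (shift n) u) (map (shift n) v)"
proof (induction rule: hn_eq.induct)
  case (refl u)
  show ?case by (rule hn_eq.refl)
next
  case (sym u v)
  show ?case by (rule hn_eq.sym[OF sym.IH])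
next
  case (trans u v w)
  then show ?case by (blast intro: hn_eq.trans)
next
  case (sq i u v)
  have "hn_eq n (map (shift n) u @ [shift n i, shift n i] @ map (shift n) v) (map (shift n) u @ map (shift n) v)"
    by (rule hn_eq.sq[OF shift_range[OF n sq]])
  then show ?case by simp
next
  case (rel u v)
  define x where "x = map (shift n) u"
  define y where "y = map (shift n) v"
  have one: "(1::nat) \<in> {1..n}" using n by simp
  have "[1..<n+1] = 1 # [2..<n+1]" using n by (simp add: upt_conv_Cons numeral_2_eq_2)
  then have r: "rev [1..<n+1] = rev [2..<n+1] @ [1]" by simp
  have "hn_eq n (x @ 1 # rev [2..<n+1] @ y) ((x @ 1 # rev [2..<n+1]) @ 1 # 1 # y)"
    using hn_eq.sym[OF hn_pair[OF one, of "x @ 1 # rev [2..<n+1]" y]] by simp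
  also have "(x @ 1 # rev [2..<n+1]) @ 1 # 1 # y = (x @ [1]) @ rev [1..<n+1] @ (1 # y)"
    unfolding r by simp
  also have "hn_eq n ((x @ [1]) @ rev [1..<n+1] @ (1 # y)) ((x @ [1]) @ (1 # y))"
    by (rule hn_eq.rel)
  also have "(x @ [1]) @ (1 # y) = x @ 1 # 1 # y" by simp
  also have "hn_eq n (x @ 1 # 1 # y) (x @ y)" by (rule hn_pair[OF one])
  finally show ?case unfolding x_def y_def using map_shift_rel[OF n] by simp
qed

lemma vword_Suc: "vword (Suc k) = Suc k # vword k"
  by (simp add: vword_def)

lemma vword_0: "vword 0 = []"
  by (simp add: vword_def)

lemma set_vword: "set (vword k) = {1..k}"
  by (auto simp: vword_def)

lemma length_vword: "length (vword k) = k"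
  by (simp add: vword_def)

lemma map_shift_vword: "k < n \<Longrightarrow> map (shift n) (vword k) @ [1] = vword (Suc k)"
proof (induction k)
  case 0
  show ?case by (simp add: vword_def)
next
  case (Suc k)
  then have "map (shift n) (vword k) @ [1] = vword (Suc k)" by simp
  moreover have "shift n (Suc k) = Suc (Suc k)" using Suc.prems by (simp add: shift_def)
  ultimately show ?case by (simp add: vword_Suc)
qed

definition W0 :: "nat \<Rightarrow> nat \<Rightarrow> nat list" where
  "W0 n i = (if even i then vword i else vword i @ [n])"

lemma wword_lo: "j \<le> n - 2 \<Longrightarrow> wword n j = W0 n j"
  by (simp add: wword_def W0_def)

lemma wword_hi: "\<not> j \<le> n - 2 \<Longrightarrow> wword n j = [n] @ W0 n (j - (n - 1)) @ [n]"
  by (simp add: wword_def W0_def)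

lemma W0_even: "even i \<Longrightarrow> W0 n i = vword i"
  by (simp add: W0_def)

lemma W0_odd: "odd i \<Longrightarrow> W0 n i = vword i @ [n]"
  by (simp add: W0_def)

lemma F1:
  assumes "n \<ge> 2"
  shows "hn_eq n ((n-1) # vword (n-2)) [n]"
proof -
  define m where "m = n - 2"
  have m: "n = Suc (Suc m)" using assms unfolding m_def by simp
  have vn: "vword n = n # (n-1) # vword (n-2)"
    unfolding m by (simp add: vword_Suc)
  have nn: "n \<in> {1..n}" using assms by simp
  have "hn_eq n ((n-1) # vword (n-2)) ([] @ n # n # ((n-1) # vword (n-2)))"
    using hn_eq.sym[OF hn_pair[OF nn, of "[]" "(n-1) # vword (n-2)"]] by simp
  also have "[] @ n # n # ((n-1) # vword (n-2)) = [n] @ vword n @ []" using vn by simp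
  also have "hn_eq n ([n] @ vword n @ []) ([n] @ [])" by (rule hn_rel)
  finally show ?thesis by simp
qed

lemma F2:
  assumes "n \<ge> 2"
  shows "hn_eq n (rev (vword (n-2)) @ [n-1]) [n]"
  using hn_rev[OF F1[OF assms]] by simp

lemma idB:
  assumes n: "n \<ge> 2"
  shows "hn_eq n (rev (vword (n-2))) ([n] @ vword (n-2) @ [n])"
proof -
  define V where "V = vword (n-2)"
  have nn: "n \<in> {1..n}" using n by simp
  have f1: "hn_eq n ((n-1) # V) [n]" unfolding V_def by (rule F1[OF n])
  have f2: "hn_eq n (rev V @ [n-1]) [n]" unfolding V_def by (rule F2[OF n])
  have "hn_eq n ([] @ [n] @ (V @ [n])) ([] @ (rev V @ [n-1]) @ (V @ [n]))"
    by (rule hn_congr[OF hn_eq.sym[OF f2]])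
  also have "[] @ (rev V @ [n-1]) @ (V @ [n]) = (rev V @ [n-1] @ V) @ [n] @ []" by simp
  also have "hn_eq n ((rev V @ [n-1] @ V) @ [n] @ []) ((rev V @ [n-1] @ V) @ ((n-1) # V) @ [])"
    by (rule hn_congr[OF hn_eq.sym[OF f1]])
  also have "(rev V @ [n-1] @ V) @ ((n-1) # V) @ [] = rev V @ ((n-1) # V) @ ((n-1) # V)" by simp
  also have "hn_eq n (rev V @ ((n-1) # V) @ ((n-1) # V)) (rev V @ [n] @ ((n-1) # V))"
    by (rule hn_congr[OF f1])
  also have "rev V @ [n] @ ((n-1) # V) = (rev V @ [n]) @ ((n-1) # V) @ []" by simp
  also have "hn_eq n ((rev V @ [n]) @ ((n-1) # V) @ []) ((rev V @ [n]) @ [n] @ [])"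
    by (rule hn_congr[OF f1])
  also have "(rev V @ [n]) @ [n] @ [] = rev V @ n # n # []" by simp
  also have "hn_eq n (rev V @ n # n # []) (rev V @ [])" by (rule hn_pair[OF nn])
  finally have "hn_eq n ([n] @ V @ [n]) (rev V)" by simp
  then show ?thesis unfolding V_def by (rule hn_eq.sym)
qed

lemma idA:
  assumes i: "i + 1 \<le> n - 2"
  shows "hn_eq n (W0 n (i+1) @ [n] @ rev (W0 n i) @ W0 n (i+1)) (W0 n i @ [n])"
proof -
  have nn: "n \<in> {1..n}" and si: "Suc i \<in> {1..n}" using i by auto
  have sv: "set (vword i) \<subseteq> {1..n}" using i by (auto simp: set_vword)
  show ?thesis
  proof (cases "even i")
    case True
    have w0: "W0 n i = vword i" using True by (simp add: W0_even)
    have w1: "W0 n (i+1) = Suc i # vword i @ [n]" using True by (simp add: W0_odd vword_Suc)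
    have "hn_eq n ((Suc i # vword i) @ n # n # (rev (vword i) @ Suc i # vword i @ [n]))
                  ((Suc i # vword i) @ (rev (vword i) @ Suc i # vword i @ [n]))"
      by (rule hn_pair[OF nn])
    also have "(Suc i # vword i) @ (rev (vword i) @ Suc i # vword i @ [n])
        = [Suc i] @ vword i @ rev (vword i) @ (Suc i # vword i @ [n])" by simp
    also have "hn_eq n ([Suc i] @ vword i @ rev (vword i) @ (Suc i # vword i @ [n])) ([Suc i] @ (Suc i # vword i @ [n]))"
      by (rule hn_cancel2[OF sv])
    also have "[Suc i] @ (Suc i # vword i @ [n]) = [] @ Suc i # Suc i # (vword i @ [n])" by simp
    also have "hn_eq n ([] @ Suc i # Suc i # (vword i @ [n])) ([] @ (vword i @ [n]))" by (rule hn_pair[OF si])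
    finally show ?thesis unfolding w0 w1 by simp
  next
    case False
    have w0: "W0 n i = vword i @ [n]" using False by (simp add: W0_odd)
    have w1: "W0 n (i+1) = Suc i # vword i" using False by (simp add: W0_even vword_Suc)
    have "hn_eq n ((Suc i # vword i) @ n # n # (rev (vword i) @ Suc i # vword i))
                  ((Suc i # vword i) @ (rev (vword i) @ Suc i # vword i))"
      by (rule hn_pair[OF nn])
    also have "(Suc i # vword i) @ (rev (vword i) @ Suc i # vword i)
        = [Suc i] @ vword i @ rev (vword i) @ (Suc i # vword i)" by simp
    also have "hn_eq n ([Suc i] @ vword i @ rev (vword i) @ (Suc i # vword i)) ([Suc i] @ (Suc i # vword i))"
      by (rule hn_cancel2[OF sv])
    also have "[Suc i] @ (Suc i # vword i) = [] @ Suc i # Suc i # vword i" by simp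
    also have "hn_eq n ([] @ Suc i # Suc i # vword i) ([] @ vword i)" by (rule hn_pair[OF si])
    also have "hn_eq n ([] @ vword i) (vword i @ n # n # [])"
      using hn_eq.sym[OF hn_pair[OF nn, of "vword i" "[]"]] by simp
    finally show ?thesis unfolding w0 w1 by simp
  qed
qed

lemma mod_ge: "(N::nat) \<le> a \<Longrightarrow> a < 2 * N \<Longrightarrow> a mod N = a - N"
  by (simp add: le_mod_geq)

lemma Kword:
  assumes n4: "n \<ge> 4" and ev: "even n" and k: "k < 2*n-2"
  shows "hn_eq n (wword n ((k+n) mod (2*n-2)) @ rev (wword n k) @ wword n ((k+1) mod (2*n-2)))
                 (wword n (((k+n) mod (2*n-2) + (2*n-2) - 1) mod (2*n-2)))"
proof -
  have nn: "n \<in> {1..n}" using n4 by simp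
  consider (A) "k + 2 < n" | (B) "k = n - 2" | (C) "n - 1 \<le> k" "k \<le> 2*n-4" | (D) "k = 2*n-3"
    using k n4 by linarith
  then show ?thesis
  proof cases
    case A
    have m1: "(k+n) mod (2*n-2) = k+n" using A by simp
    have m2: "(k+1) mod (2*n-2) = k+1" using A by simp
    have m3: "(k+n + (2*n-2) - 1) mod (2*n-2) = k+n-1" using A n4 by (simp add: mod_ge)
    have w1: "wword n (k+n) = [n] @ W0 n (k+1) @ [n]" using A n4 by (simp add: wword_hi)
    have w2: "wword n k = W0 n k" using A by (simp add: wword_lo)
    have w3: "wword n (k+1) = W0 n (k+1)" using A by (simp add: wword_lo)
    have w4: "wword n (k+n-1) = [n] @ W0 n k @ [n]" using A n4 by (simp add: wword_hi)
    have "hn_eq n ([n] @ (W0 n (k+1) @ [n] @ rev (W0 n k) @ W0 n (k+1)) @ []) ([n] @ (W0 n k @ [n]) @ [])"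
      by (rule hn_congr[OF idA]) (use A in simp)
    then show ?thesis unfolding m1 m2 m3 w1 w2 w3 w4 by simp
  next
    case B
    have "k + n = 2*n-2" using B n4 by simp
    then have m1: "(k+n) mod (2*n-2) = 0" by simp
    have m2: "(k+1) mod (2*n-2) = n-1" using B n4 by simp
    have m3: "(0 + (2*n-2) - 1) mod (2*n-2) = 2*n-3" using n4 by simp
    have w1: "wword n 0 = []" by (simp add: wword_lo W0_even vword_0)
    have w2: "wword n k = vword (n-2)" using B ev by (simp add: wword_lo W0_even)
    have w3: "wword n (n-1) = [n, n]" using n4 by (simp add: wword_hi W0_even vword_0)
    have w4: "wword n (2*n-3) = [n] @ vword (n-2) @ [n]" using n4 ev by (simp add: wword_hi W0_even)
    have "hn_eq n (rev (vword (n-2)) @ n # n # []) (rev (vword (n-2)) @ [])" by (rule hn_pair[OF nn])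
    also have "hn_eq n (rev (vword (n-2)) @ []) ([n] @ vword (n-2) @ [n])" using idB[of n] n4 by simp
    finally show ?thesis unfolding m1 m2 m3 w1 w2 w3 w4 by simp
  next
    case C
    define i where "i = k - (n-1)"
    have i: "i + 1 \<le> n - 2" using C n4 unfolding i_def by linarith
    have m1: "(k+n) mod (2*n-2) = i+1" using C n4 unfolding i_def by (simp add: mod_ge)
    have m2: "(k+1) mod (2*n-2) = k+1" using C n4 by simp
    have m3: "(i+1 + (2*n-2) - 1) mod (2*n-2) = i" using i n4 by (simp add: mod_ge)
    have w1: "wword n (i+1) = W0 n (i+1)" using i by (simp add: wword_lo)
    have w2: "wword n k = [n] @ W0 n i @ [n]" using C n4 unfolding i_def by (simp add: wword_hi)
    have w3: "wword n (k+1) = [n] @ W0 n (i+1) @ [n]" using C n4 unfolding i_def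
      by (simp add: wword_hi Suc_diff_le)
    have w4: "wword n i = W0 n i" using i by (simp add: wword_lo)
    have "hn_eq n ((W0 n (i+1) @ [n] @ rev (W0 n i)) @ n # n # (W0 n (i+1) @ [n]))
                  ((W0 n (i+1) @ [n] @ rev (W0 n i)) @ (W0 n (i+1) @ [n]))" by (rule hn_pair[OF nn])
    also have "(W0 n (i+1) @ [n] @ rev (W0 n i)) @ (W0 n (i+1) @ [n])
       = [] @ (W0 n (i+1) @ [n] @ rev (W0 n i) @ W0 n (i+1)) @ [n]" by simp
    also have "hn_eq n ([] @ (W0 n (i+1) @ [n] @ rev (W0 n i) @ W0 n (i+1)) @ [n]) ([] @ (W0 n i @ [n]) @ [n])"
      by (rule hn_congr[OF idA[OF i]])
    also have "[] @ (W0 n i @ [n]) @ [n] = W0 n i @ n # n # []" by simp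
    also have "hn_eq n (W0 n i @ n # n # []) (W0 n i @ [])" by (rule hn_pair[OF nn])
    finally show ?thesis unfolding m1 m2 m3 w1 w2 w3 w4 by simp
  next
    case D
    have m1: "(k+n) mod (2*n-2) = n-1" using D n4 by (simp add: mod_ge)
    have "k + 1 = 2*n-2" using D n4 by simp
    then have m2: "(k+1) mod (2*n-2) = 0" by simp
    have m3: "(n-1 + (2*n-2) - 1) mod (2*n-2) = n-2" using n4 by (simp add: mod_ge)
    have w1: "wword n (n-1) = [n, n]" using n4 by (simp add: wword_hi W0_even vword_0)
    have w2: "wword n k = [n] @ vword (n-2) @ [n]" using D n4 ev by (simp add: wword_hi W0_even)
    have w3: "wword n 0 = []" by (simp add: wword_lo W0_even vword_0)
    have w4: "wword n (n-2) = vword (n-2)" using ev by (simp add: wword_lo W0_even)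
    have "hn_eq n ([] @ n # n # ([n] @ rev (vword (n-2)) @ [n])) ([] @ ([n] @ rev (vword (n-2)) @ [n]))"
      by (rule hn_pair[OF nn])
    also have "[] @ ([n] @ rev (vword (n-2)) @ [n]) = [n] @ rev (vword (n-2)) @ [n]" by simp
    also have "hn_eq n ([n] @ rev (vword (n-2)) @ [n]) ([n] @ ([n] @ vword (n-2) @ [n]) @ [n])"
      by (rule hn_congr[OF idB]) (use n4 in simp)
    also have "[n] @ ([n] @ vword (n-2) @ [n]) @ [n] = [] @ n # n # (vword (n-2) @ [n, n])" by simp
    also have "hn_eq n ([] @ n # n # (vword (n-2) @ [n, n])) ([] @ (vword (n-2) @ [n, n]))"
      by (rule hn_pair[OF nn])
    also have "[] @ (vword (n-2) @ [n, n]) = vword (n-2) @ n # n # []" by simp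
    also have "hn_eq n (vword (n-2) @ n # n # []) (vword (n-2) @ [])" by (rule hn_pair[OF nn])
    finally show ?thesis unfolding m1 m2 m3 w1 w2 w3 w4 by simp
  qed
qed

lemma map_shift_W0_odd: "i < n \<Longrightarrow> map (shift n) (vword i @ [n]) = vword (Suc i)"
  using map_shift_vword[of i n] by (simp add: shift_def)

lemma Sword:
  assumes n4: "n \<ge> 4" and ev: "even n" and j: "j < 2*n-2"
  shows "hn_eq n (if even j then map (shift n) (wword n j) @ [1, n] else map (shift n) (wword n j))
                 ((if j \<le> n - 2 then [] else [1, n]) @ wword n ((j+1) mod (2*n-2)))"
proof -
  have nn: "n \<in> {1..n}" and one: "(1::nat) \<in> {1..n}" using n4 by auto
  have f1: "hn_eq n ((n-1) # vword (n-2)) [n]" using F1 n4 by simp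
  have n12: "n - 1 = Suc (n-2)" using n4 by simp
  have vn1: "vword (n-1) = (n-1) # vword (n-2)" by (simp only: n12 vword_Suc)
  consider (a1) "j \<le> n - 2" "even j" "j \<noteq> n - 2" | (a2) "j = n - 2"
    | (b) "j \<le> n - 2" "odd j" | (c1) "\<not> j \<le> n - 2" "odd j" "j \<noteq> 2*n-3"
    | (c2) "j = 2*n-3" | (d) "\<not> j \<le> n - 2" "even j"
    by blast
  then show ?thesis
  proof cases
    case a1
    have j2: "j + 1 \<le> n - 2" using a1 by linarith
    have w1: "wword n j = vword j" using a1 by (simp add: wword_lo W0_even)
    have w2: "wword n (j+1) = vword (Suc j) @ [n]" using a1 j2 by (simp add: wword_lo W0_odd)
    have m: "(j+1) mod (2*n-2) = j+1" using j2 n4 by simp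
    have "map (shift n) (vword j) @ [1] = vword (Suc j)" by (rule map_shift_vword) (use a1 n4 in simp)
    then have "map (shift n) (wword n j) @ [1, n] = wword n (j+1)" unfolding w1 w2
      by (metis append.assoc append_Cons append_Nil)
    then show ?thesis using a1 m by (simp add: hn_eq.refl)
  next
    case a2
    have ej: "even j" using a2 ev by simp
    have w1: "wword n j = vword (n-2)" using a2 ej by (simp add: wword_lo W0_even)
    have m: "(j+1) mod (2*n-2) = n-1" using a2 n4 by simp
    have w2: "wword n (n-1) = [n, n]" using n4 by (simp add: wword_hi W0_even vword_0)
    have e: "map (shift n) (vword (n-2)) @ [1] = vword (n-1)"
      unfolding n12 using map_shift_vword[of "n-2" n] n4 by simp
    have "hn_eq n ([] @ ((n-1) # vword (n-2)) @ [n]) ([] @ [n] @ [n])" by (rule hn_congr[OF f1])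
    then have "hn_eq n (map (shift n) (vword (n-2)) @ [1, n]) [n, n]"
      using e vn1 by (metis append.assoc append_Cons append_Nil)
    then show ?thesis using a2 ej w1 w2 m by simp
  next
    case b
    have j2: "j + 1 \<le> n - 2" using b ev n4 by presburger
    have w1: "wword n j = vword j @ [n]" using b by (simp add: wword_lo W0_odd)
    have w2: "wword n (j+1) = vword (Suc j)" using b j2 by (simp add: wword_lo W0_even)
    have m: "(j+1) mod (2*n-2) = j+1" using j2 n4 by simp
    have "map (shift n) (wword n j) = wword n (j+1)" unfolding w1 w2
      by (rule map_shift_W0_odd) (use b n4 in simp)
    then show ?thesis using b m by (simp add: hn_eq.refl)
  next
    case c1
    define i where "i = j - (n-1)"
    have ei: "even i" using c1 ev n4 unfolding i_def by (simp add: even_diff_nat)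
    have i2: "i + 1 \<le> n - 2" using c1 j n4 unfolding i_def by linarith
    have w1: "wword n j = [n] @ vword i @ [n]" using c1 ei unfolding i_def by (simp add: wword_hi W0_even)
    have jj: "j + 1 < 2*n-2" using c1 j by simp
    have w2: "wword n (j+1) = [n] @ (vword (Suc i) @ [n]) @ [n]" using c1 ei jj n4 unfolding i_def
      by (simp add: wword_hi W0_odd Suc_diff_le)
    have m: "(j+1) mod (2*n-2) = j+1" using jj by simp
    have e: "map (shift n) (vword i) @ [1] = vword (Suc i)" by (rule map_shift_vword) (use i2 in simp)
    have l: "map (shift n) (wword n j) = [1] @ vword (Suc i)" unfolding w1 using e by (simp add: shift_def)
    have "hn_eq n ([1] @ n # n # (vword (Suc i) @ [n, n])) ([1] @ (vword (Suc i) @ [n, n]))"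
      by (rule hn_pair[OF nn])
    also have "[1] @ (vword (Suc i) @ [n, n]) = ([1] @ vword (Suc i)) @ n # n # []" by simp
    also have "hn_eq n (([1] @ vword (Suc i)) @ n # n # []) (([1] @ vword (Suc i)) @ [])" by (rule hn_pair[OF nn])
    finally have "hn_eq n ([1] @ n # n # (vword (Suc i) @ [n, n])) ([1] @ vword (Suc i))" by simp
    then have "hn_eq n ([1] @ vword (Suc i)) ([1, n] @ wword n (j+1))" unfolding w2
      using hn_eq.sym by fastforce
    then show ?thesis using c1 m l by simp
  next
    case c2
    have ev2: "even (n-2)" using ev n4 by simp
    have oj: "odd j" using c2 ev n4 by (simp add: even_diff_nat)
    have w1: "wword n j = [n] @ vword (n-2) @ [n]" using c2 ev2 n4 by (simp add: wword_hi W0_even)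
    have "j + 1 = 2*n-2" using c2 n4 by simp
    then have m: "(j+1) mod (2*n-2) = 0" by simp
    have w0: "wword n 0 = []" by (simp add: wword_lo W0_even vword_0)
    have e: "map (shift n) (vword (n-2)) @ [1] = vword (n-1)"
      unfolding n12 using map_shift_vword[of "n-2" n] n4 by simp
    have l: "map (shift n) (wword n j) = [1] @ ((n-1) # vword (n-2)) @ []"
      unfolding w1 using e vn1 by (simp add: shift_def)
    have "hn_eq n ([1] @ ((n-1) # vword (n-2)) @ []) ([1] @ [n] @ [])" by (rule hn_congr[OF f1])
    have nj: "\<not> j \<le> n - 2" using c2 n4 by simp
    then show ?thesis using c2 oj m l w0 n4 \<open>hn_eq n ([1] @ ((n-1) # vword (n-2)) @ []) ([1] @ [n] @ [])\<close> by simp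
  next
    case d
    define i where "i = j - (n-1)"
    have oi: "odd i" using d ev n4 unfolding i_def by (simp add: even_diff_nat)
    have jj: "j + 1 < 2*n-2" using d j ev n4 by presburger
    have i2: "i + 1 \<le> n - 2" using d jj n4 unfolding i_def by linarith
    have w1: "wword n j = [n] @ (vword i @ [n]) @ [n]" using d oi unfolding i_def by (simp add: wword_hi W0_odd)
    have w2: "wword n (j+1) = [n] @ vword (Suc i) @ [n]" using d oi jj n4 unfolding i_def
      by (simp add: wword_hi W0_even Suc_diff_le)
    have m: "(j+1) mod (2*n-2) = j+1" using jj by simp
    have e: "map (shift n) (vword i @ [n]) = vword (Suc i)" by (rule map_shift_W0_odd) (use i2 in simp)
    have l: "map (shift n) (wword n j) @ [1, n] = ([1] @ vword (Suc i)) @ 1 # 1 # [n]"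
      unfolding w1 using e by (simp add: shift_def)
    have "hn_eq n (([1] @ vword (Suc i)) @ 1 # 1 # [n]) (([1] @ vword (Suc i)) @ [n])" by (rule hn_pair[OF one])
    also have "([1] @ vword (Suc i)) @ [n] = [1] @ vword (Suc i) @ [n]" by simp
    also have "hn_eq n ([1] @ vword (Suc i) @ [n]) ([1] @ n # n # (vword (Suc i) @ [n]))"
      by (rule hn_eq.sym[OF hn_pair[OF nn]])
    finally have "hn_eq n (map (shift n) (wword n j) @ [1, n]) ([1, n] @ wword n (j+1))"
      unfolding l w2 by simp
    then show ?thesis using d m by simp
  qed
qed

section \<open>Projective points and homomorphisms\<close>

lemma proj_refl: "proj_eq x x"
  unfolding proj_eq_def by (intro exI[of _ 1]) simp

lemma proj_sym: "proj_eq x y \<Longrightarrow> proj_eq y x"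
  unfolding proj_eq_def
  by (metis divide_eq_0_iff one_neq_zero vector_smult_assoc nonzero_divide_eq_eq vector_smult_lid)

lemma proj_trans: "proj_eq x y \<Longrightarrow> proj_eq y z \<Longrightarrow> proj_eq x z"
  unfolding proj_eq_def by (metis mult_eq_0_iff vector_smult_assoc)

lemma mat_smult: "A *v (c *s x) = c *s (A *v (x::complex^2))"
  by (simp add: vec_eq_iff matrix_vector_mult_def sum_distrib_left algebra_simps)

lemmas [trans] = proj_trans

lemma proj_mat: "proj_eq x y \<Longrightarrow> proj_eq (A *v x) (A *v y)"
  unfolding proj_eq_def by (metis mat_smult)

lemma mproj_apply:
  assumes "mproj_eq A B"
  shows "proj_eq (A *v x) (B *v (x::complex^2))"
proof -
  obtain c where c: "c \<noteq> 0" "A = (\<chi> i j. c * B$i$j)" using assms unfolding mproj_eq_def by blast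
  have "A *v x = c *s (B *v x)" unfolding c(2)
    by (simp add: vec_eq_iff matrix_vector_mult_def sum_distrib_left algebra_simps)
  then show ?thesis using c(1) unfolding proj_eq_def by blast
qed

lemma herm_nondeg:
  assumes H: "hermitian_sig11 H" and z: "\<forall>y. herm H x y = 0"
  shows "x = 0"
proof -
  have dn: "Re (det H) < 0" using H by (simp add: hermitian_sig11_def)
  have d0: "dlt x y = 0" for y
  proof -
    have "Re (det H) * (cmod (dlt x y))^2 = 0" using gram2[OF H, of x y] z by simp
    then show ?thesis using dn by simp
  qed
  have "dlt x (vector [1, 0]) = 0" "dlt x (vector [0, 1]) = 0" using d0 by auto
  then have "x$2 = 0" "x$1 = 0" by (simp_all add: dlt_def)
  then show ?thesis by (simp add: vec_eq_iff forall_2)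
qed

lemma unitary_cdisc:
  assumes H: "hermitian_sig11 H" and A: "unitary_H H A" and x: "x \<in> cdisc H"
  shows "A *v x \<in> cdisc H"
proof -
  have hx: "herm H (A *v x) (A *v x) = herm H x x" using A by (simp add: unitary_H_def)
  have "A *v x \<noteq> 0"
  proof
    assume a0: "A *v x = 0"
    have "\<forall>y. herm H x y = 0"
    proof
      fix y
      have "herm H x y = herm H (A *v x) (A *v y)" using A by (simp add: unitary_H_def)
      then show "herm H x y = 0" using a0 by simp
    qed
    then have "x = 0" by (rule herm_nondeg[OF H])
    then show False using x by (simp add: cdisc_def)
  qed
  then show ?thesis using x hx by (simp add: cdisc_def)
qed

lemma proj_cdisc: "proj_eq a b \<Longrightarrow> b \<in> cdisc H \<Longrightarrow> a \<in> cdisc H"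
  unfolding proj_eq_def using cdisc_scale by blast

lemma tA_proj_unitary:
  assumes "unitary_H H A" "proj_eq a (A *v a')" "proj_eq b (A *v b')" "proj_eq c (A *v c')"
  shows "tA H a b c = tA H a' b' c'"
  using tA_proj[OF assms(2-4)] tA_unitary[OF assms(1)] by simp

definition vw :: "nat \<Rightarrow> nat list \<Rightarrow> bool" where
  "vw n u \<longleftrightarrow> valid_word n u \<and> even (length u)"

lemma vw_append: "vw n u \<Longrightarrow> vw n v \<Longrightarrow> vw n (u @ v)"
  by (simp add: vw_def valid_word_def)

lemma vw_rev: "vw n u \<Longrightarrow> vw n (rev u)"
  by (simp add: vw_def valid_word_def)

lemma hom_unit: "hom_Gn n H \<sigma> \<Longrightarrow> vw n u \<Longrightarrow> unitary_H H (\<sigma> u)"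
  by (simp add: hom_Gn_def vw_def)

lemma hom_nil: "hom_Gn n H \<sigma> \<Longrightarrow> proj_eq (\<sigma> [] *v x) x"
  unfolding hom_Gn_def using mproj_apply[of "\<sigma> []" "mat 1" x] by simp

lemma hom_app:
  assumes "hom_Gn n H \<sigma>" "vw n u" "vw n v"
  shows "proj_eq (\<sigma> (u @ v) *v x) (\<sigma> u *v (\<sigma> v *v x))"
proof -
  have "mproj_eq (\<sigma> (u @ v)) (\<sigma> u ** \<sigma> v)" using assms unfolding hom_Gn_def vw_def by blast
  then show ?thesis using mproj_apply by (simp add: matrix_vector_mul_assoc)
qed

lemma hom_hn:
  assumes "hom_Gn n H \<sigma>" "vw n u" "vw n v" "hn_eq n u v"
  shows "proj_eq (\<sigma> u *v x) (\<sigma> v *v x)"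
proof -
  have "mproj_eq (\<sigma> u) (\<sigma> v)" using assms unfolding hom_Gn_def vw_def by blast
  then show ?thesis by (rule mproj_apply)
qed

lemma vw_wword:
  assumes "n \<ge> 2" "j < 2*n-2"
  shows "vw n (wword n j)"
proof -
  have a: "set (W0 n i) \<subseteq> {1..n}" "even (length (W0 n i))" if "i \<le> n - 2" for i
    using that assms(1) by (auto simp: W0_def set_vword length_vword)
  show ?thesis
  proof (cases "j \<le> n - 2")
    case True
    then show ?thesis using a[of j] by (simp add: vw_def valid_word_def wword_lo)
  next
    case False
    have "j - (n-1) \<le> n - 2" using assms by linarith
    then show ?thesis using a[of "j - (n-1)"] False assms(1) by (simp add: vw_def valid_word_def wword_hi)
  qed
qed

lemma vw_lit: "n \<ge> 1 \<Longrightarrow> vw n [1, n]" "n \<ge> 1 \<Longrightarrow> vw n [n, 1]" "vw n []"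
  by (auto simp: vw_def valid_word_def)

definition ptX :: "nat \<Rightarrow> (nat list \<Rightarrow> complex^2^2) \<Rightarrow> complex^2 \<Rightarrow> complex^2 \<Rightarrow> nat \<Rightarrow> complex^2" where
  "ptX n \<sigma> p q t = \<sigma> (wword n t) *v (if even t then p else q)"

lemma ptX_cdisc:
  assumes H: "hermitian_sig11 H" and hom: "hom_Gn n H \<sigma>" and n: "n \<ge> 2"
    and p: "p \<in> cdisc H" and q: "q \<in> cdisc H" and t: "t < 2*n-2"
  shows "ptX n \<sigma> p q t \<in> cdisc H"
  unfolding ptX_def using unitary_cdisc[OF H hom_unit[OF hom vw_wword[OF n t]]] p q by simp

lemma Area_psum:
  assumes H: "hermitian_sig11 H" and hom: "hom_Gn n H \<sigma>" and n: "n \<ge> 2"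
    and p: "p \<in> cdisc H" and q: "q \<in> cdisc H" and c: "c \<in> cdisc H"
  shows "Area_n n H p q \<sigma> = psum H c (ptX n \<sigma> p q) (2*n-2)"
proof -
  define N where "N = 2*n-2"
  have N: "N > 0" using n by (simp add: N_def)
  define c0 where "c0 = (SOME c. c \<in> cdisc H)"
  have c0: "c0 \<in> cdisc H" unfolding c0_def using p by (rule someI)
  have X: "\<forall>k<N. ptX n \<sigma> p q k \<in> cdisc H" using ptX_cdisc[OF H hom n p q] by (simp add: N_def)
  have "Area_n n H p q \<sigma> = poly_area_c H c0 (map (ptX n \<sigma> p q) [0..<N])"
    unfolding Area_n_def poly_area_def c0_def N_def ptX_def by simp
  also have "\<dots> = (\<Sum>k<N. tri_area H c0 (ptX n \<sigma> p q k) (ptX n \<sigma> p q ((k+1) mod N)))"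
    unfolding poly_area_c_def length_map length_upt diff_zero
  proof (rule sum.cong[OF HOL.refl])
    fix k assume k: "k \<in> {..<N}"
    have k1: "(k+1) mod N < N" using N by simp
    show "tri_area H c0 (map (ptX n \<sigma> p q) [0..<N] ! k) (map (ptX n \<sigma> p q) [0..<N] ! ((k + 1) mod N))
        = tri_area H c0 (ptX n \<sigma> p q k) (ptX n \<sigma> p q ((k+1) mod N))"
      using k k1 by (simp only: nth_map length_upt diff_zero nth_upt add_0 lessThan_iff)
  qed
  also have "\<dots> = psum H c0 (ptX n \<sigma> p q) N"
    unfolding psum_def by (simp only: tri_area_tA[OF H])
  also have "\<dots> = psum H c (ptX n \<sigma> p q) N" by (rule base_change[OF H c0 c X N])
  finally show ?thesis by (simp add: N_def)
qed

section \<open>Independence of the base points\<close>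

lemma par_kn:
  fixes n k :: nat
  assumes "even n" "n \<ge> 4" "k < 2*n-2"
  shows "even ((k+n) mod (2*n-2)) = even k"
proof (cases "k + n < 2*n-2")
  case True
  then show ?thesis using assms by simp
next
  case False
  then have e: "(k+n) mod (2*n-2) = k + n - (2*n-2)" using assms by (simp add: mod_ge)
  have "even (k + n - (2*n-2)) = even k" using assms False by presburger
  then show ?thesis unfolding e .
qed

lemma par_pred:
  assumes "(N::nat) > 0" "even N" "m < N"
  shows "even ((m + N - 1) mod N) = odd m"
proof (cases "m = 0")
  case True
  then show ?thesis using assms by simp
next
  case False
  then have e: "(m + N - 1) mod N = m - 1" using assms by (simp add: mod_ge)
  have "even (m - 1) = odd m" using False by presburger
  then show ?thesis unfolding e .
qed

lemma par_succ:
  assumes "(N::nat) > 0" "even N" "k < N"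
  shows "even ((k + 1) mod N) = odd k"
proof (cases "k + 1 = N")
  case True
  have "odd k" using True assms by presburger
  then show ?thesis using True by simp
next
  case False
  then have "(k + 1) mod N = k + 1" using assms by simp
  then show ?thesis by simp
qed

lemma Kpair:
  assumes H: "hermitian_sig11 H" and hom: "hom_Gn n H \<sigma>" and n4: "n \<ge> 4" and ev: "even n" and k: "k < 2*n-2"
  defines "N \<equiv> 2*n-2"
  shows "tA H (ptX n \<sigma> p q ((k+n) mod N)) (ptX n \<sigma> p' q' ((k+n) mod N)) (ptX n \<sigma> p q (((k+n) mod N + N - 1) mod N))
       = tA H (ptX n \<sigma> p q k) (ptX n \<sigma> p' q' k) (ptX n \<sigma> p q ((k+1) mod N))"
proof -
  have N: "N > 0" "even N" using n4 by (auto simp: N_def)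
  define m where "m = (k+n) mod N"
  define m' where "m' = (m + N - 1) mod N"
  define k1 where "k1 = (k+1) mod N"
  have mN: "m < N" "m' < N" "k1 < N" using N by (auto simp: m_def m'_def k1_def)
  have kN: "k < N" using k by (simp add: N_def)
  have n2: "n \<ge> 2" using n4 by simp
  have vwm: "vw n (wword n m)" and vwk: "vw n (wword n k)" and vwk1: "vw n (wword n k1)" and vwm': "vw n (wword n m')"
    using vw_wword[OF n2] mN kN by (auto simp: N_def)
  define h where "h = wword n m @ rev (wword n k)"
  have vwh: "vw n h" unfolding h_def by (rule vw_append[OF vwm vw_rev[OF vwk]])
  have sk: "set (wword n k) \<subseteq> {1..n}" using vwk by (simp add: vw_def valid_word_def)
  have e1: "hn_eq n (h @ wword n k) (wword n m)"
    using hn_cancel[OF sk, of "wword n m" "[]"] unfolding h_def by simp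
  have e2: "hn_eq n (h @ wword n k1) (wword n m')"
    using Kword[OF n4 ev k] unfolding h_def m'_def m_def k1_def N_def by simp
  have U: "unitary_H H (\<sigma> h)" by (rule hom_unit[OF hom vwh])
  have pr: "proj_eq (\<sigma> w' *v y) (\<sigma> h *v (\<sigma> w *v y))"
    if "hn_eq n (h @ w) w'" "vw n w" "vw n w'" for w w' y
  proof -
    have "proj_eq (\<sigma> w' *v y) (\<sigma> (h @ w) *v y)"
      by (rule hom_hn[OF hom that(3) vw_append[OF vwh that(2)] hn_eq.sym[OF that(1)]])
    also have "proj_eq (\<sigma> (h @ w) *v y) (\<sigma> h *v (\<sigma> w *v y))" by (rule hom_app[OF hom vwh that(2)])
    finally show ?thesis .
  qed
  have pm: "even m = even k" unfolding m_def N_def by (rule par_kn[OF ev n4 k])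
  have pm': "even m' = even k1" unfolding m'_def k1_def using par_pred[OF N mN(1)] par_succ[OF N kN] pm by simp
  have a1: "proj_eq (ptX n \<sigma> p q m) (\<sigma> h *v ptX n \<sigma> p q k)"
    unfolding ptX_def pm by (rule pr[OF e1 vwk vwm])
  have a2: "proj_eq (ptX n \<sigma> p' q' m) (\<sigma> h *v ptX n \<sigma> p' q' k)"
    unfolding ptX_def pm by (rule pr[OF e1 vwk vwm])
  have a3: "proj_eq (ptX n \<sigma> p q m') (\<sigma> h *v ptX n \<sigma> p q k1)"
    unfolding ptX_def pm' by (rule pr[OF e2 vwk1 vwm'])
  show ?thesis using tA_proj_unitary[OF U a1 a2 a3] unfolding m_def m'_def k1_def .
qed

lemma Indep1:
  assumes H: "hermitian_sig11 H" and hom: "hom_Gn n H \<sigma>" and n4: "n \<ge> 4" and ev: "even n"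
    and p: "p \<in> cdisc H" and q: "q \<in> cdisc H" and p': "p' \<in> cdisc H" and q': "q' \<in> cdisc H"
    and o: "p = p' \<or> q = q'"
  shows "Area_n n H p q \<sigma> = Area_n n H p' q' \<sigma>"
proof -
  define N where "N = 2*n-2"
  have N: "N > 0" "even N" using n4 by (auto simp: N_def)
  have n2: "n \<ge> 2" using n4 by simp
  define X where "X = ptX n \<sigma> p q"
  define X' where "X' = ptX n \<sigma> p' q'"
  have XC: "\<forall>k<N. X k \<in> cdisc H" using ptX_cdisc[OF H hom n2 p q] by (simp add: X_def N_def)
  have XC': "\<forall>k<N. X' k \<in> cdisc H" using ptX_cdisc[OF H hom n2 p' q'] by (simp add: X'_def N_def)
  have adj: "\<forall>k<N. X k = X' k \<or> X ((k+1) mod N) = X' ((k+1) mod N)"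
  proof (intro allI impI)
    fix k assume k: "k < N"
    have "even ((k+1) mod N) = odd k" by (rule par_succ[OF N k])
    then show "X k = X' k \<or> X ((k+1) mod N) = X' ((k+1) mod N)"
      using o unfolding X_def X'_def ptX_def by auto
  qed
  have A1: "Area_n n H p q \<sigma> = psum H p X N" unfolding X_def N_def by (rule Area_psum[OF H hom n2 p q p])
  have A2: "Area_n n H p' q' \<sigma> = psum H p X' N" unfolding X'_def N_def by (rule Area_psum[OF H hom n2 p' q' p])
  have D: "psum H p X N - psum H p X' N =
     (\<Sum>k<N. tA H (X k) (X' k) (X ((k+N-1) mod N))) - (\<Sum>k<N. tA H (X k) (X' k) (X ((k+1) mod N)))"
    by (rule poly_change[OF H p XC XC' N(1) adj])
  have "(\<Sum>k<N. tA H (X k) (X' k) (X ((k+N-1) mod N)))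
      = (\<Sum>k<N. (\<lambda>t. tA H (X t) (X' t) (X ((t+N-1) mod N))) ((k + n) mod N))"
    by (rule sum_shift[OF N(1), symmetric])
  also have "\<dots> = (\<Sum>k<N. tA H (X k) (X' k) (X ((k+1) mod N)))"
  proof (rule sum.cong[OF HOL.refl])
    fix k assume "k \<in> {..<N}"
    then have k: "k < 2*n-2" by (simp add: N_def)
    show "(\<lambda>t. tA H (X t) (X' t) (X ((t+N-1) mod N))) ((k + n) mod N) = tA H (X k) (X' k) (X ((k+1) mod N))"
      using Kpair[OF H hom n4 ev k, of p q p' q'] unfolding X_def X'_def N_def by simp
  qed
  finally show ?thesis using A1 A2 D by simp
qed

lemma Indep:
  assumes H: "hermitian_sig11 H" and hom: "hom_Gn n H \<sigma>" and n4: "n \<ge> 4" and ev: "even n"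
    and p: "p \<in> cdisc H" and q: "q \<in> cdisc H" and p': "p' \<in> cdisc H" and q': "q' \<in> cdisc H"
  shows "Area_n n H p q \<sigma> = Area_n n H p' q' \<sigma>"
  using Indep1[OF H hom n4 ev p q p' q] Indep1[OF H hom n4 ev p' q p' q'] p q p' q' by simp

section \<open>The shift step\<close>

lemma hom_shiftS:
  assumes hom: "hom_Gn n H \<sigma>" and n: "n \<ge> 1"
  shows "hom_Gn n H (\<lambda>u. \<sigma> (map (shift n) u))"
proof -
  have v: "valid_word n (map (shift n) u)" if "valid_word n u" for u
    using that shift_range[OF n] by (auto simp: valid_word_def)
  show ?thesis using hom unfolding hom_Gn_def
    by (auto simp: v hn_shift[OF n])
qed

lemma Sstep:
  assumes H: "hermitian_sig11 H" and hom: "hom_Gn n H \<sigma>" and n4: "n \<ge> 4" and ev: "even n"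
    and f: "f \<in> cdisc H"
  shows "Area_n n H (\<sigma> [1, n] *v f) f (\<lambda>u. \<sigma> (map (shift n) u)) = Area_n n H f f \<sigma>"
proof -
  define N where "N = 2*n-2"
  have N: "N > 0" "even N" using n4 by (auto simp: N_def)
  have n1: "n \<ge> 1" and n2: "n \<ge> 2" using n4 by auto
  define \<sigma>' where "\<sigma>' = (\<lambda>u. \<sigma> (map (shift n) u))"
  have hom': "hom_Gn n H \<sigma>'" unfolding \<sigma>'_def by (rule hom_shiftS[OF hom n1])
  define A where "A = \<sigma> [1, n]"
  have UA: "unitary_H H A" unfolding A_def by (rule hom_unit[OF hom vw_lit(1)[OF n1]])
  define p where "p = A *v f"
  have p: "p \<in> cdisc H" unfolding p_def by (rule unitary_cdisc[OF H UA f])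
  define d where "d = \<sigma> [n, 1] *v f"
  have d: "d \<in> cdisc H" unfolding d_def by (rule unitary_cdisc[OF H hom_unit[OF hom vw_lit(2)[OF n1]] f])
  define Y where "Y = ptX n \<sigma>' p f"
  define X where "X = ptX n \<sigma> f f"
  have Xe: "X t = \<sigma> (wword n t) *v f" for t unfolding X_def ptX_def by simp
  have XC: "X t \<in> cdisc H" if "t < N" for t using ptX_cdisc[OF H hom n2 f f] that by (simp add: X_def N_def)
  have YC: "Y t \<in> cdisc H" if "t < N" for t using ptX_cdisc[OF H hom' n2 p f] that by (simp add: Y_def N_def)
  have nn: "n \<in> {1..n}" and one: "(1::nat) \<in> {1..n}" using n1 by auto
  have X0: "proj_eq (X 0) f" unfolding Xe using hom_nil[OF hom] by (simp add: wword_lo W0_even vword_0)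
  have w1: "wword n 1 = [1, n]" using n4 by (simp add: wword_lo W0_odd vword_def)
  have X1: "X 1 = A *v f" unfolding Xe A_def w1 ..
  have fAd: "proj_eq f (A *v d)"
  proof -
    have "proj_eq (A *v d) (\<sigma> ([1, n] @ [n, 1]) *v f)" unfolding A_def d_def
      by (rule proj_sym[OF hom_app[OF hom vw_lit(1)[OF n1] vw_lit(2)[OF n1]]])
    also have "proj_eq (\<sigma> ([1, n] @ [n, 1]) *v f) (\<sigma> [] *v f)"
    proof (rule hom_hn[OF hom])
      show "vw n ([1, n] @ [n, 1])" using n1 by (simp add: vw_def valid_word_def)
      show "vw n []" by (rule vw_lit(3))
      have "hn_eq n ([1] @ n # n # [1]) ([1] @ [1])" by (rule hn_pair[OF nn])
      also have "hn_eq n ([1] @ [1]) ([] @ 1 # 1 # [])" by (simp add: hn_eq.refl)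
      also have "hn_eq n ([] @ 1 # 1 # []) ([] @ [])" by (rule hn_pair[OF one])
      finally show "hn_eq n ([1, n] @ [n, 1]) []" by simp
    qed
    also have "proj_eq (\<sigma> [] *v f) f" by (rule hom_nil[OF hom])
    finally show ?thesis by (rule proj_sym)
  qed
  have Xn1: "proj_eq (X (n-1)) f"
  proof -
    have w: "wword n (n-1) = [n, n]" using n4 by (simp add: wword_hi W0_even vword_0)
    have "proj_eq (\<sigma> [n, n] *v f) (\<sigma> [] *v f)"
    proof (rule hom_hn[OF hom])
      show "vw n [n, n]" using n1 by (simp add: vw_def valid_word_def)
      show "vw n []" by (rule vw_lit(3))
      show "hn_eq n [n, n] []" using hn_pair[OF nn, of "[]" "[]"] by simp
    qed
    also have "proj_eq (\<sigma> [] *v f) f" by (rule hom_nil[OF hom])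
    finally show ?thesis unfolding Xe w .
  qed
  have Xn: "proj_eq (X n) d"
  proof -
    have w: "wword n n = [n, 1, n, n]" using n4 by (simp add: wword_hi W0_odd vword_def)
    have "proj_eq (\<sigma> [n, 1, n, n] *v f) (\<sigma> [n, 1] *v f)"
    proof (rule hom_hn[OF hom])
      show "vw n [n, 1, n, n]" using n1 by (simp add: vw_def valid_word_def)
      show "vw n [n, 1]" by (rule vw_lit(2)[OF n1])
      show "hn_eq n [n, 1, n, n] [n, 1]" using hn_pair[OF nn, of "[n, 1]" "[]"] by simp
    qed
    then show ?thesis unfolding Xe w d_def .
  qed
  have YX: "proj_eq (Y j) (if j \<le> n - 2 then X ((j+1) mod N) else A *v X ((j+1) mod N))" if j: "j < N" for j
  proof -
    define Tw where "Tw = map (shift n) (wword n j)"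
    define B where "B = (if j \<le> n - 2 then [] else [1, n])"
    define W where "W = wword n ((j+1) mod N)"
    have jj: "j < 2*n-2" using j by (simp add: N_def)
    have vwT: "vw n Tw" using vw_wword[OF n2 jj] shift_range[OF n1]
      unfolding Tw_def by (auto simp: vw_def valid_word_def)
    have vwB: "vw n B" unfolding B_def using vw_lit(1)[OF n1] vw_lit(3) by simp
    have vwW: "vw n W" unfolding W_def using vw_wword[OF n2] N by (simp add: N_def)
    have S: "hn_eq n (if even j then Tw @ [1, n] else Tw) (B @ W)"
      using Sword[OF n4 ev jj] unfolding Tw_def B_def W_def N_def .
    have step: "proj_eq (Y j) (\<sigma> (B @ W) *v f)"
    proof (cases "even j")
      case True
      have "Y j = \<sigma> Tw *v (A *v f)" unfolding Y_def ptX_def \<sigma>'_def Tw_def p_def using True by simp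
      also have "proj_eq (\<sigma> Tw *v (A *v f)) (\<sigma> (Tw @ [1, n]) *v f)"
        unfolding A_def by (rule proj_sym[OF hom_app[OF hom vwT vw_lit(1)[OF n1]]])
      also have "proj_eq (\<sigma> (Tw @ [1, n]) *v f) (\<sigma> (B @ W) *v f)"
        by (rule hom_hn[OF hom vw_append[OF vwT vw_lit(1)[OF n1]] vw_append[OF vwB vwW]]) (use S True in simp)
      finally show ?thesis .
    next
      case False
      have "Y j = \<sigma> Tw *v f" unfolding Y_def ptX_def \<sigma>'_def Tw_def using False by simp
      also have "proj_eq (\<sigma> Tw *v f) (\<sigma> (B @ W) *v f)"
        by (rule hom_hn[OF hom vwT vw_append[OF vwB vwW]]) (use S False in simp)
      finally show ?thesis .
    qed
    also have "proj_eq (\<sigma> (B @ W) *v f) (\<sigma> B *v (\<sigma> W *v f))" by (rule hom_app[OF hom vwB vwW])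
    also have "\<sigma> W *v f = X ((j+1) mod N)" unfolding W_def Xe ..
    finally have r: "proj_eq (Y j) (\<sigma> B *v X ((j+1) mod N))" .
    show ?thesis
    proof (cases "j \<le> n - 2")
      case True
      have "proj_eq (\<sigma> B *v X ((j+1) mod N)) (X ((j+1) mod N))"
        unfolding B_def using True hom_nil[OF hom] by simp
      then show ?thesis using proj_trans[OF r] True by simp
    next
      case False
      then show ?thesis using r unfolding B_def A_def by simp
    qed
  qed
  define G where "G x = tA H f d x" for x
  define u where "u j = G (X ((j+1) mod N))" for j
  define e where "e j = (if n - 1 \<le> j \<and> j < 2*n-3 then u j - u (Suc j) else 0)" for j
  have claim: "tA H f (Y j) (Y ((j+1) mod N)) = tA H f (X ((j+1) mod N)) (X (((j+1) mod N + 1) mod N)) + e j"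
    if j: "j < N" for j
  proof -
    have fA: "A *v f \<in> cdisc H" by (rule unitary_cdisc[OF H UA f])
    consider (i) "j + 3 \<le> n" | (ii) "j = n - 2" | (iii) "n - 1 \<le> j" "j < 2*n-3" | (iv) "j = 2*n-3"
      using j n4 unfolding N_def by linarith
    then show ?thesis
    proof cases
      case i
      have j1: "(j+1) mod N = j+1" using i N n4 by (simp add: N_def)
      have c: "j \<le> n - 2" using i by simp
      have y1: "proj_eq (Y j) (X (j+1))" using i j1 c YX[OF j] by simp
      have jN: "j + 1 < N" using i n4 by (simp add: N_def)
      have c2: "Suc j \<le> n - 2" using i by simp
      have y2: "proj_eq (Y (j+1)) (X ((j+1+1) mod N))" using i c2 YX[OF jN] by simp
      have "\<not> n - 1 \<le> j" using i by simp
      then have "e j = 0" unfolding e_def by simp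
      then show ?thesis unfolding j1 using tA_proj[OF proj_refl y1 y2] by simp
    next
      case ii
      have j1: "(j+1) mod N = n - 1" using ii n4 by (simp add: N_def)
      have n1N: "n - 1 < N" using n4 by (simp add: N_def)
      have j2: "(n - 1 + 1) mod N = n" using n4 by (simp add: N_def)
      have y1: "proj_eq (Y j) f" using ii j1 proj_trans[OF _ Xn1] YX[OF j] by simp
      have c2: "\<not> n - 1 \<le> n - 2" using n4 by simp
      have "proj_eq (Y (n-1)) (A *v X n)" using n4 j2 c2 YX[OF n1N] by simp
      also have "proj_eq (A *v X n) (A *v d)" by (rule proj_mat[OF Xn])
      also have "proj_eq (A *v d) f" by (rule proj_sym[OF fAd])
      finally have y2: "proj_eq (Y (n-1)) f" .
      have a: "tA H f (Y j) (Y ((j+1) mod N)) = 0" unfolding j1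
        using tA_proj[OF proj_refl y1 y2] tA_aab[OF H f] by simp
      have b: "tA H f (X (n-1)) (X n) = 0"
        using tA_proj[OF proj_refl Xn1 proj_refl] tA_aab[OF H f] by simp
      have "\<not> n - 1 \<le> j" using ii n4 by simp
      then have "e j = 0" unfolding e_def by simp
      then show ?thesis using a b j1 j2 by simp
    next
      case iii
      have jN: "j + 1 < N" using iii n4 by (simp add: N_def)
      have j1: "(j+1) mod N = j+1" using jN by simp
      have c1: "\<not> j \<le> n - 2" "\<not> Suc j \<le> n - 2" using iii n4 by auto
      have y1: "proj_eq (Y j) (A *v X (j+1))" using iii j1 c1 YX[OF j] by simp
      have y2: "proj_eq (Y (j+1)) (A *v X ((j+1+1) mod N))" using iii c1 YX[OF jN] by simp
      have a: "tA H f (Y j) (Y (j+1)) = tA H d (X (j+1)) (X ((j+1+1) mod N))"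
        by (rule tA_proj_unitary[OF UA fAd y1 y2])
      have c: "tA H d (X (j+1)) (X ((j+1+1) mod N)) - tA H f (X (j+1)) (X ((j+1+1) mod N))
             + tA H f d (X ((j+1+1) mod N)) - tA H f d (X (j+1)) = 0"
        by (rule cocycle[OF H f d XC[OF jN] XC]) (use N in simp)
      have "e j = u j - u (Suc j)" using iii unfolding e_def by simp
      also have "\<dots> = G (X (j+1)) - G (X ((j+1+1) mod N))" unfolding u_def j1
        by (simp add: mod_Suc_eq)
      finally have ee: "e j = tA H f d (X (j+1)) - tA H f d (X ((j+1+1) mod N))" unfolding G_def .
      show ?thesis unfolding j1 using a c ee by linarith
    next
      case iv
      have "j + 1 = N" using iv n4 by (simp add: N_def)
      then have j1: "(j+1) mod N = 0" by simp
      have c1: "\<not> j \<le> n - 2" using iv n4 by auto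
      have y1: "proj_eq (Y j) (A *v X 0)" using iv j1 n4 c1 YX[OF j] by simp
      have y1': "proj_eq (Y j) (A *v f)" using proj_trans[OF y1 proj_mat[OF X0]] .
      have n0: "0 < N" using N by simp
      have m1: "(0+1) mod N = 1" using n4 by (simp add: N_def)
      have c0: "(0::nat) \<le> n - 2" by simp
      have y2: "proj_eq (Y 0) (X 1)" using m1 c0 YX[OF n0] by simp
      have a: "tA H f (Y j) (Y 0) = 0" using tA_proj[OF proj_refl y1' y2] tA_baa[OF H fA] X1 by simp
      have b: "tA H f (X 0) (X 1) = 0" using tA_proj[OF proj_refl X0 proj_refl] tA_aab[OF H f] by simp
      have "\<not> j < 2*n-3" using iv by simp
      then have "e j = 0" unfolding e_def by simp
      then show ?thesis using a b j1 N by (simp add: N_def)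
    qed
  qed
  have A1: "Area_n n H p f \<sigma>' = psum H f Y N" unfolding Y_def N_def by (rule Area_psum[OF H hom' n2 p f f])
  have A2: "Area_n n H f f \<sigma> = psum H f X N" unfolding X_def N_def by (rule Area_psum[OF H hom n2 f f f])
  have "psum H f Y N = (\<Sum>j<N. tA H f (X ((j+1) mod N)) (X (((j+1) mod N + 1) mod N)) + e j)"
    unfolding psum_def by (rule sum.cong[OF HOL.refl]) (rule claim, simp)
  also have "\<dots> = (\<Sum>j<N. tA H f (X ((j+1) mod N)) (X (((j+1) mod N + 1) mod N))) + (\<Sum>j<N. e j)"
    by (simp only: sum.distrib)
  also have "(\<Sum>j<N. tA H f (X ((j+1) mod N)) (X (((j+1) mod N + 1) mod N))) = psum H f X N"
    unfolding psum_def by (rule sum_shift1[OF N(1), of "\<lambda>t. tA H f (X t) (X ((t+1) mod N))"])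
  also have "(\<Sum>j<N. e j) = 0"
  proof -
    have fin: "finite {..<N}" by simp
    have "(\<Sum>j<N. e j) = (\<Sum>j\<in>{j \<in> {..<N}. n - 1 \<le> j \<and> j < 2*n-3}. u j - u (Suc j))"
      unfolding e_def by (rule sum.inter_filter[OF fin, symmetric])
    also have "{j \<in> {..<N}. n - 1 \<le> j \<and> j < 2*n-3} = {n-1..<2*n-3}" using n4 by (auto simp: N_def)
    also have "(\<Sum>j = n-1..<2*n-3. u j - u (Suc j)) = - (\<Sum>j = n-1..<2*n-3. u (Suc j) - u j)"
      by (simp add: sum_negf[symmetric])
    also have "(\<Sum>j = n-1..<2*n-3. u (Suc j) - u j) = u (2*n-3) - u (n-1)"
      by (rule sum_Suc_diff') (use n4 in simp)
    also have "u (n-1) = 0"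
    proof -
      have "(n - 1 + 1) mod N = n" using n4 by (simp add: N_def)
      then have "u (n-1) = tA H f d (X n)" unfolding u_def G_def by simp
      also have "\<dots> = tA H f d d" by (rule tA_proj[OF proj_refl proj_refl Xn])
      also have "\<dots> = 0" by (rule tA_baa[OF H d])
      finally show ?thesis .
    qed
    also have "u (2*n-3) = 0"
    proof -
      have "2*n-3+1 = N" using n4 by (simp add: N_def)
      then have "(2*n-3+1) mod N = 0" by simp
      then have "u (2*n-3) = tA H f d (X 0)" unfolding u_def G_def by simp
      also have "\<dots> = tA H f d f" by (rule tA_proj[OF proj_refl proj_refl X0])
      also have "\<dots> = 0" by (rule tA_aba[OF H f])
      finally show ?thesis .
    qed
    finally show ?thesis by simp
  qed
  finally show ?thesis using A1 A2 unfolding p_def A_def \<sigma>'_def by simp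
qed

lemma iterS:
  assumes H: "hermitian_sig11 H" and hom: "hom_Gn n H \<rho>" and n4: "n \<ge> 4" and ev: "even n"
  shows "hom_Gn n H (\<lambda>u. \<rho> (map (shift n ^^ i) u)) \<and>
    (\<forall>p q. p \<in> cdisc H \<longrightarrow> q \<in> cdisc H \<longrightarrow> Area_n n H p q (\<lambda>u. \<rho> (map (shift n ^^ i) u)) = Area_n n H p q \<rho>)"
proof (induction i)
  case 0
  have "(\<lambda>u. \<rho> (map (shift n ^^ 0) u)) = \<rho>" by (simp add: id_def)
  then show ?case using hom by simp
next
  case (Suc i)
  define \<sigma> where "\<sigma> = (\<lambda>u. \<rho> (map (shift n ^^ i) u))"
  have hs: "hom_Gn n H \<sigma>" using Suc.IH unfolding \<sigma>_def by blast
  have e: "(\<lambda>u. \<rho> (map (shift n ^^ Suc i) u)) = (\<lambda>u. \<sigma> (map (shift n) u))"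
    unfolding \<sigma>_def by (simp add: funpow_Suc_right del: funpow.simps)
  have n1: "n \<ge> 1" using n4 by simp
  have hs': "hom_Gn n H (\<lambda>u. \<sigma> (map (shift n) u))" by (rule hom_shiftS[OF hs n1])
  have A: "Area_n n H p q (\<lambda>u. \<sigma> (map (shift n) u)) = Area_n n H p q \<rho>"
    if p: "p \<in> cdisc H" and q: "q \<in> cdisc H" for p q
  proof -
    have sp: "\<sigma> [1, n] *v p \<in> cdisc H"
      by (rule unitary_cdisc[OF H hom_unit[OF hs vw_lit(1)[OF n1]] p])
    have "Area_n n H p q (\<lambda>u. \<sigma> (map (shift n) u)) = Area_n n H (\<sigma> [1, n] *v p) p (\<lambda>u. \<sigma> (map (shift n) u))"
      by (rule Indep[OF H hs' n4 ev p q sp p])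
    also have "\<dots> = Area_n n H p p \<sigma>" by (rule Sstep[OF H hs n4 ev p])
    also have "\<dots> = Area_n n H p q \<sigma>" by (rule Indep[OF H hs n4 ev p p p q])
    also have "\<dots> = Area_n n H p q \<rho>" using Suc.IH p q unfolding \<sigma>_def by blast
    finally show ?thesis .
  qed
  show ?case unfolding e using hs' A by blast
qed

theorem corollary5p8:
  fixes n :: nat and H :: "complex^2^2" and \<rho> :: "nat list \<Rightarrow> complex^2^2"
  assumes "n \<ge> 6" and "even n"
    and "hermitian_sig11 H"
    and "hom_Gn n H \<rho>"
  shows "\<forall>p q p' q' i j. p \<in> cdisc H \<and> q \<in> cdisc H \<and> p' \<in> cdisc H \<and> q' \<in> cdisc H
           \<and> i \<in> {1..n} \<and> j \<in> {1..n} \<longrightarrow>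
           Area_i n i H p q \<rho> = Area_i n j H p' q' \<rho>"
proof (intro allI impI)
  fix p q p' q' i j
  assume a: "p \<in> cdisc H \<and> q \<in> cdisc H \<and> p' \<in> cdisc H \<and> q' \<in> cdisc H \<and> i \<in> {1..n} \<and> j \<in> {1..n}"
  have n4: "n \<ge> 4" using assms(1) by simp
  have "Area_i n i H p q \<rho> = Area_n n H p q \<rho>"
    unfolding Area_i_def using iterS[OF assms(3) assms(4) n4 assms(2), of i] a by blast
  also have "\<dots> = Area_n n H p' q' \<rho>" by (rule Indep[OF assms(3) assms(4) n4 assms(2)]) (use a in auto)
  also have "\<dots> = Area_i n j H p' q' \<rho>"
    unfolding Area_i_def using iterS[OF assms(3) assms(4) n4 assms(2), of j] a by simp
  finally show "Area_i n i H p q \<rho> = Area_i n j H p' q' \<rho>" .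
qed

end
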